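(* Let $\mathfrak{v}=\mathfrak{v}_{\bar 0}\oplus\mathfrak{v}_{\bar 1}$ be a finite-dimensional complex superspace, $\chi\in\mathfrak{v}_{\bar 0}^*$, and $\hat A$ the completion of $S[\mathfrak{v}]$ at $M_\chi$, with an even continuous Poisson bracket $\{\cdot,\cdot\}$. (i) If there are odd $f,g\in\hat AM_\chi$ with $\{f,g\}=1+t$ for some $t\in M_\chi$, then there exists an odd $h\in\hat A$ with $\{h,h\}=1$. (ii) For an odd $h\in\hat A$ with $\{h,h\}=1$, let $\hat B_1=\ker(\mathrm{ad}_h)$. Then $\phi:\bigwedge(\mathbb{C}h)\otimes\hat B_1\to\hat A$, $a\otimes b\mapsto ab$, is an isomorphism of Poisson algebras.
   Context: $M_\chi$ is the ideal generated by $x-\chi(x)$, $x\in\mathfrak{v}$ ($\chi$ extended by zero on $\mathfrak{v}_{\bar 1}$), $\hat A=\varprojlim S[\mathfrak{v}]/M_\chi^k$; $\mathrm{ad}_h=\{h,\cdot\}$. $\bigwedge(\mathbb{C}h)=\mathbb{C}\oplus\mathbb{C}h$ carries the Poisson bracket with $\{h,h\}=1$. *)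

theory Defs
  imports Complex_Main
begin

text \<open>
  Choose a basis x_0..x_{m-1} of the even part and
  xi_0..xi_{n-1} of the odd part of the superspace v.  Put y_i = x_i - chi(x_i)
  (and xi_j - chi(xi_j) = xi_j since chi vanishes on the odd part).  Then
  M_chi is generated by the y_i and xi_j, and the M_chi-adic completion
  of S[v] is the algebra of formal power series in the commuting variables y_i
  with coefficients in the Grassmann algebra on the xi_j.
  An element is represented by its coefficient function:
  a alpha S = coefficient of y^alpha * xi_S, where alpha : nat => nat is an
  exponent vector supported in {..<m}, S a subset of {..<n}, and xi_S is the
  product of the xi_j, j in S, in increasing order.
\<close>

type_synonym ser = "(nat \<Rightarrow> nat) \<Rightarrow> nat set \<Rightarrow> complex"

definition valid_idx :: "nat \<Rightarrow> nat \<Rightarrow> (nat \<Rightarrow> nat) \<Rightarrow> nat set \<Rightarrow> bool" where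
  "valid_idx m n \<alpha> S \<longleftrightarrow> (\<forall>i\<ge>m. \<alpha> i = 0) \<and> S \<subseteq> {..<n}"

definition Ahat :: "nat \<Rightarrow> nat \<Rightarrow> ser set" where
  "Ahat m n = {a. \<forall>\<alpha> S. \<not> valid_idx m n \<alpha> S \<longrightarrow> a \<alpha> S = 0}"

definition szero :: ser where "szero = (\<lambda>\<alpha> S. 0)"
definition sone :: ser where "sone = (\<lambda>\<alpha> S. if (\<forall>i. \<alpha> i = 0) \<and> S = {} then 1 else 0)"
definition sadd :: "ser \<Rightarrow> ser \<Rightarrow> ser" where "sadd a b = (\<lambda>\<alpha> S. a \<alpha> S + b \<alpha> S)"
definition sneg :: "ser \<Rightarrow> ser" where "sneg a = (\<lambda>\<alpha> S. - a \<alpha> S)"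
definition sscal :: "complex \<Rightarrow> ser \<Rightarrow> ser" where "sscal c a = (\<lambda>\<alpha> S. c * a \<alpha> S)"

text \<open>Sign of the permutation sorting xi_T * xi_U (T, U disjoint) into xi_{T \<union> U}.\<close>
definition shuffle_sign :: "nat set \<Rightarrow> nat set \<Rightarrow> complex" where
  "shuffle_sign T U = (-1) ^ card {(i, j). i \<in> T \<and> j \<in> U \<and> j < i}"

text \<open>Multiplication of super power series (y's commute with everything, xi's anticommute).\<close>
definition smult :: "ser \<Rightarrow> ser \<Rightarrow> ser" where
  "smult a b = (\<lambda>\<alpha> S. \<Sum>\<beta>\<in>{\<beta>. \<forall>i. \<beta> i \<le> \<alpha> i}. \<Sum>T\<in>Pow S.
      shuffle_sign T (S - T) * a \<beta> T * b (\<lambda>i. \<alpha> i - \<beta> i) (S - T))"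

text \<open>Parity: \<open>homog m n p a\<close> means a is homogeneous of parity p (True = odd).\<close>
definition homog :: "nat \<Rightarrow> nat \<Rightarrow> bool \<Rightarrow> ser \<Rightarrow> bool" where
  "homog m n p a \<longleftrightarrow> a \<in> Ahat m n \<and> (\<forall>\<alpha> S. odd (card S) \<noteq> p \<longrightarrow> a \<alpha> S = 0)"

definition spar :: "ser \<Rightarrow> ser" where
  "spar a = (\<lambda>\<alpha> S. (-1) ^ card S * a \<alpha> S)"

definition ssign :: "bool \<Rightarrow> bool \<Rightarrow> complex" where
  "ssign p q = (if p \<and> q then -1 else 1)"

text \<open>(Closure in \<open>\<hat>A\<close> of) the k-th power of M_chi: series of order at least k,
  where y_i and xi_j have degree 1.  \<open>mhat m n 1\<close> is the ideal \<open>\<hat>A M_chi\<close>.\<close>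
definition mhat :: "nat \<Rightarrow> nat \<Rightarrow> nat \<Rightarrow> ser set" where
  "mhat m n k = {a \<in> Ahat m n. \<forall>\<alpha> S. (\<Sum>i<m. \<alpha> i) + card S < k \<longrightarrow> a \<alpha> S = 0}"

definition poisson_bracket :: "nat \<Rightarrow> nat \<Rightarrow> (ser \<Rightarrow> ser \<Rightarrow> ser) \<Rightarrow> bool" where
  "poisson_bracket m n br \<longleftrightarrow>
     (\<forall>a\<in>Ahat m n. \<forall>b\<in>Ahat m n. br a b \<in> Ahat m n) \<and>
     (\<forall>a\<in>Ahat m n. \<forall>b\<in>Ahat m n. \<forall>c\<in>Ahat m n.
        br (sadd a b) c = sadd (br a c) (br b c) \<and> br c (sadd a b) = sadd (br c a) (br c b)) \<and>
     (\<forall>z. \<forall>a\<in>Ahat m n. \<forall>b\<in>Ahat m n.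
        br (sscal z a) b = sscal z (br a b) \<and> br a (sscal z b) = sscal z (br a b)) \<and>
     (\<forall>p q a b. homog m n p a \<longrightarrow> homog m n q b \<longrightarrow> homog m n (p \<noteq> q) (br a b)) \<and>
     (\<forall>p q a b. homog m n p a \<longrightarrow> homog m n q b \<longrightarrow>
        br a b = sneg (sscal (ssign p q) (br b a))) \<and>
     (\<forall>p q a b c. homog m n p a \<longrightarrow> homog m n q b \<longrightarrow> c \<in> Ahat m n \<longrightarrow>
        br a (smult b c) = sadd (smult (br a b) c) (sscal (ssign p q) (smult b (br a c)))) \<and>
     (\<forall>p q a b c. homog m n p a \<longrightarrow> homog m n q b \<longrightarrow> c \<in> Ahat m n \<longrightarrow>
        br a (br b c) = sadd (br (br a b) c) (sscal (ssign p q) (br b (br a c)))) \<and>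
     (\<forall>k. \<exists>l. \<forall>a\<in>mhat m n l. \<forall>b\<in>Ahat m n. br a b \<in> mhat m n k \<and> br b a \<in> mhat m n k)"

text \<open>The Poisson superalgebra \<open>\<And>(\<complex>h) \<otimes> B\<close>: an element 1\<otimes>b0 + h\<otimes>b1 is the pair (b0, b1).
  Super tensor product sign rules, with h odd, h*h = 0, {h,h} = 1, {1,-} = 0:
   (x\<otimes>y)(x'\<otimes>y') = (-1)^{|y||x'|} xx'\<otimes>yy',
   {x\<otimes>y, x'\<otimes>y'} = (-1)^{|y||x'|} ({x,x'}\<otimes>yy' + xx'\<otimes>{y,y'}).\<close>
definition tadd :: "ser \<times> ser \<Rightarrow> ser \<times> ser \<Rightarrow> ser \<times> ser" where
  "tadd x y = (sadd (fst x) (fst y), sadd (snd x) (snd y))"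
definition tscal :: "complex \<Rightarrow> ser \<times> ser \<Rightarrow> ser \<times> ser" where
  "tscal c x = (sscal c (fst x), sscal c (snd x))"
definition tone :: "ser \<times> ser" where "tone = (sone, szero)"
definition tmult :: "ser \<times> ser \<Rightarrow> ser \<times> ser \<Rightarrow> ser \<times> ser" where
  "tmult x y = (smult (fst x) (fst y),
                sadd (smult (spar (fst x)) (snd y)) (smult (snd x) (fst y)))"
definition tbr :: "(ser \<Rightarrow> ser \<Rightarrow> ser) \<Rightarrow> ser \<times> ser \<Rightarrow> ser \<times> ser \<Rightarrow> ser \<times> ser" where
  "tbr br x y = (sadd (br (fst x) (fst y)) (smult (spar (snd x)) (snd y)),
                 sadd (br (spar (fst x)) (snd y)) (br (snd x) (fst y)))"
definition tpar :: "ser \<times> ser \<Rightarrow> ser \<times> ser" where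
  "tpar x = (spar (fst x), sneg (spar (snd x)))"

end

theory Submission
  imports Defs "HOL-Computational_Algebra.Formal_Power_Series"
begin

definition Le :: "(nat \<Rightarrow> nat) \<Rightarrow> (nat \<Rightarrow> nat) set" where
  "Le \<alpha> = {\<beta>. \<forall>i. \<beta> i \<le> \<alpha> i}"

definition sgn :: "nat set \<Rightarrow> nat set \<Rightarrow> complex" where
  "sgn T U = shuffle_sign T U"

lemma smult_Le: "smult a b \<alpha> S = (\<Sum>\<beta>\<in>Le \<alpha>. \<Sum>T\<in>Pow S.
      shuffle_sign T (S - T) * a \<beta> T * b (\<lambda>i. \<alpha> i - \<beta> i) (S - T))"
  unfolding smult_def Le_def by simp

lemma finite_Le:
  assumes "\<forall>i\<ge>m. \<alpha> i = 0"
  shows "finite (Le \<alpha>)"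
proof -
  have "Le \<alpha> \<subseteq> (\<lambda>f i. if i < m then f i else 0) ` (PiE {..<m} (\<lambda>i. {..\<alpha> i}))"
  proof
    fix \<beta> assume b: "\<beta> \<in> Le \<alpha>"
    have "\<beta> = (\<lambda>i. if i < m then restrict \<beta> {..<m} i else 0)"
    proof
      fix i show "\<beta> i = (if i < m then restrict \<beta> {..<m} i else 0)"
        using b assms unfolding Le_def by (cases "i < m") (auto, metis le_zero_eq not_le)
    qed
    moreover have "restrict \<beta> {..<m} \<in> PiE {..<m} (\<lambda>i. {..\<alpha> i})"
      using b unfolding Le_def by auto
    ultimately show "\<beta> \<in> (\<lambda>f i. if i < m then f i else 0) ` (PiE {..<m} (\<lambda>i. {..\<alpha> i}))"
      by blast
  qed
  moreover have "finite (PiE {..<m} (\<lambda>i. {..\<alpha> i}))" by (intro finite_PiE) auto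
  ultimately show ?thesis using finite_subset by blast
qed

lemma Ahat_iff: "a \<in> Ahat m n \<longleftrightarrow> (\<forall>\<alpha> S. \<not> valid_idx m n \<alpha> S \<longrightarrow> a \<alpha> S = 0)"
  unfolding Ahat_def by simp

lemma AhatD: "a \<in> Ahat m n \<Longrightarrow> \<not> valid_idx m n \<alpha> S \<Longrightarrow> a \<alpha> S = 0"
  unfolding Ahat_def by simp

lemma Ahat_eqI:
  assumes "a \<in> Ahat m n" "b \<in> Ahat m n"
    and "\<And>\<alpha> S. valid_idx m n \<alpha> S \<Longrightarrow> a \<alpha> S = b \<alpha> S"
  shows "a = b"
  using assms unfolding Ahat_def by (auto simp: fun_eq_iff) (metis)

lemma valid_finite: "valid_idx m n \<alpha> S \<Longrightarrow> finite (Le \<alpha>)"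
  unfolding valid_idx_def by (auto intro: finite_Le)

lemma valid_finiteS: "valid_idx m n \<alpha> S \<Longrightarrow> finite S"
  unfolding valid_idx_def by (auto intro: finite_subset)

lemma valid_sub:
  assumes "valid_idx m n \<alpha> S" "\<beta> \<in> Le \<alpha>" "T \<subseteq> S"
  shows "valid_idx m n \<beta> T" "valid_idx m n (\<lambda>i. \<alpha> i - \<beta> i) (S - T)"
  using assms unfolding valid_idx_def Le_def by (auto, metis le_zero_eq)

lemma smult_term_zero:
  assumes "a \<in> Ahat m n" "b \<in> Ahat m n" "\<not> valid_idx m n \<alpha> S" "\<beta> \<in> Le \<alpha>" "T \<subseteq> S"
  shows "a \<beta> T * b (\<lambda>i. \<alpha> i - \<beta> i) (S - T) = 0"
proof -
  have "a \<beta> T = 0 \<or> b (\<lambda>i. \<alpha> i - \<beta> i) (S - T) = 0"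
  proof (cases "\<exists>i\<ge>m. \<alpha> i \<noteq> 0")
    case True
    then obtain i where i: "i \<ge> m" "\<alpha> i \<noteq> 0" by blast
    show ?thesis
    proof (cases "\<beta> i = 0")
      case True
      hence "\<not> valid_idx m n (\<lambda>i. \<alpha> i - \<beta> i) (S - T)" using i unfolding valid_idx_def by auto
      thus ?thesis using assms(2) AhatD by blast
    next
      case False
      hence "\<not> valid_idx m n \<beta> T" using i unfolding valid_idx_def by auto
      thus ?thesis using assms(1) AhatD by blast
    qed
  next
    case False
    then obtain x where x: "x \<in> S" "x \<ge> n" using assms(3) unfolding valid_idx_def by (meson lessThan_iff not_le subsetI)
    show ?thesis
    proof (cases "x \<in> T")
      case True
      hence "\<not> valid_idx m n \<beta> T" using x unfolding valid_idx_def by auto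
      thus ?thesis using assms(1) AhatD by blast
    next
      case False
      hence "\<not> valid_idx m n (\<lambda>i. \<alpha> i - \<beta> i) (S - T)" using x unfolding valid_idx_def by auto
      thus ?thesis using assms(2) AhatD by blast
    qed
  qed
  thus ?thesis by auto
qed

lemma smult_Ahat:
  assumes "a \<in> Ahat m n" "b \<in> Ahat m n"
  shows "smult a b \<in> Ahat m n"
  unfolding Ahat_iff smult_Le
  using smult_term_zero[OF assms] by (auto intro!: sum.neutral simp: mult.assoc)

lemma Le_mono: "\<beta> \<in> Le \<alpha> \<Longrightarrow> Le \<beta> \<subseteq> Le \<alpha>"
  unfolding Le_def by (auto intro: order_trans)

lemma reindex_N:
  assumes fin: "finite (Le \<alpha>)"
  shows "(\<Sum>\<beta>\<in>Le \<alpha>. \<Sum>\<gamma>\<in>Le \<beta>. G \<gamma> (\<lambda>i. \<beta> i - \<gamma> i) (\<lambda>i. \<alpha> i - \<beta> i))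
       = (\<Sum>\<gamma>\<in>Le \<alpha>. \<Sum>\<delta>\<in>Le (\<lambda>i. \<alpha> i - \<gamma> i). G \<gamma> \<delta> (\<lambda>i. \<alpha> i - \<gamma> i - \<delta> i))"
proof -
  have f1: "\<And>\<beta>. \<beta> \<in> Le \<alpha> \<Longrightarrow> finite (Le \<beta>)" using fin Le_mono finite_subset by blast
  have f2: "\<And>\<gamma>. \<gamma> \<in> Le \<alpha> \<Longrightarrow> finite (Le (\<lambda>i. \<alpha> i - \<gamma> i))"
    using fin by (rule finite_subset[rotated]) (auto simp: Le_def, meson diff_le_self order_trans)
  have "(\<Sum>\<beta>\<in>Le \<alpha>. \<Sum>\<gamma>\<in>Le \<beta>. G \<gamma> (\<lambda>i. \<beta> i - \<gamma> i) (\<lambda>i. \<alpha> i - \<beta> i))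
      = (\<Sum>(\<beta>,\<gamma>)\<in>Sigma (Le \<alpha>) Le. G \<gamma> (\<lambda>i. \<beta> i - \<gamma> i) (\<lambda>i. \<alpha> i - \<beta> i))"
    using fin f1 by (intro sum.Sigma) auto
  also have "\<dots> = (\<Sum>(\<gamma>,\<delta>)\<in>Sigma (Le \<alpha>) (\<lambda>\<gamma>. Le (\<lambda>i. \<alpha> i - \<gamma> i)). G \<gamma> \<delta> (\<lambda>i. \<alpha> i - \<gamma> i - \<delta> i))"
  proof (rule sum.reindex_bij_witness[where i="\<lambda>(\<gamma>,\<delta>). (\<lambda>i. \<gamma> i + \<delta> i, \<gamma>)"
        and j="\<lambda>(\<beta>,\<gamma>). (\<gamma>, \<lambda>i. \<beta> i - \<gamma> i)"], goal_cases)
    case (1 b)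
    obtain \<beta> \<gamma> where b: "b = (\<beta>, \<gamma>)" by (cases b)
    have g: "\<forall>i. \<gamma> i \<le> \<beta> i" using 1 b by (simp add: Le_def)
    thus ?case using b by (simp add: fun_eq_iff)
  next
    case (2 b)
    obtain \<beta> \<gamma> where b: "b = (\<beta>, \<gamma>)" by (cases b)
    have g: "\<forall>i. \<gamma> i \<le> \<beta> i" "\<forall>i. \<beta> i \<le> \<alpha> i" using 2 b by (simp_all add: Le_def)
    hence "\<forall>i. \<gamma> i \<le> \<alpha> i" "\<forall>i. \<beta> i - \<gamma> i \<le> \<alpha> i - \<gamma> i" using order_trans diff_le_mono by blast+
    thus ?case using b by (simp add: Le_def)
  next
    case (3 a) thus ?case by (cases a) simp
  next
    case (4 a)
    obtain \<gamma> \<delta> where a: "a = (\<gamma>, \<delta>)" by (cases a)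
    have g: "\<forall>i. \<gamma> i \<le> \<alpha> i" and d: "\<forall>i. \<delta> i \<le> \<alpha> i - \<gamma> i" using 4 a by (auto simp: Le_def)
    have "\<forall>i. \<gamma> i + \<delta> i \<le> \<alpha> i" using g d by (simp add: le_diff_conv2 add.commute)
    thus ?case using a by (simp add: Le_def)
  next
    case (5 b)
    obtain \<beta> \<gamma> where b: "b = (\<beta>, \<gamma>)" by (cases b)
    have g: "\<forall>i. \<gamma> i \<le> \<beta> i" "\<forall>i. \<beta> i \<le> \<alpha> i" using 5 b by (simp_all add: Le_def)
    have "(\<lambda>i. \<alpha> i - \<gamma> i - (\<beta> i - \<gamma> i)) = (\<lambda>i. \<alpha> i - \<beta> i)" using g by (simp add: fun_eq_iff)
    thus ?case using b by simp
  qed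
  also have "\<dots> = (\<Sum>\<gamma>\<in>Le \<alpha>. \<Sum>\<delta>\<in>Le (\<lambda>i. \<alpha> i - \<gamma> i). G \<gamma> \<delta> (\<lambda>i. \<alpha> i - \<gamma> i - \<delta> i))"
    using fin f2 by (intro sum.Sigma[symmetric]) auto
  finally show ?thesis .
qed

lemma reindex_P:
  assumes fin: "finite S"
  shows "(\<Sum>T\<in>Pow S. \<Sum>R\<in>Pow T. H R (T - R) (S - T))
       = (\<Sum>R\<in>Pow S. \<Sum>U\<in>Pow (S - R). H R U (S - R - U))"
proof -
  have dd: "\<And>b a. b \<subseteq> a \<Longrightarrow> S - b - (a - b) = S - a" by auto
  have f1: "\<And>T. T \<in> Pow S \<Longrightarrow> finite (Pow T)" using fin by (auto intro: finite_subset)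
  have f2: "\<And>R. R \<in> Pow S \<Longrightarrow> finite (Pow (S - R))" using fin by auto
  have "(\<Sum>T\<in>Pow S. \<Sum>R\<in>Pow T. H R (T - R) (S - T)) = (\<Sum>(T,R)\<in>Sigma (Pow S) Pow. H R (T - R) (S - T))"
    using fin f1 by (intro sum.Sigma) auto
  also have "\<dots> = (\<Sum>(R,U)\<in>Sigma (Pow S) (\<lambda>R. Pow (S - R)). H R U (S - R - U))"
  proof (rule sum.reindex_bij_witness[where i="\<lambda>(R,U). (R \<union> U, R)" and j="\<lambda>(T,R). (R, T - R)"], goal_cases)
    case (1 a) thus ?case by (cases a) auto
  next
    case (2 a) thus ?case by (cases a) auto
  next
    case (3 a) thus ?case by (cases a) auto
  next
    case (4 a) thus ?case by (cases a) auto
  next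
    case (5 a) thus ?case by (cases a) (simp add: dd)
  qed
  also have "\<dots> = (\<Sum>R\<in>Pow S. \<Sum>U\<in>Pow (S - R). H R U (S - R - U))"
    using fin f2 by (intro sum.Sigma[symmetric]) auto
  finally show ?thesis .
qed

definition inv :: "nat set \<Rightarrow> nat set \<Rightarrow> (nat \<times> nat) set" where
  "inv T U = {(i, j). i \<in> T \<and> j \<in> U \<and> j < i}"

lemma shuffle_sign_inv: "shuffle_sign T U = (-1) ^ card (inv T U)"
  unfolding shuffle_sign_def inv_def by simp

lemma finite_inv: "finite T \<Longrightarrow> finite U \<Longrightarrow> finite (inv T U)"
  by (rule finite_subset[of _ "T \<times> U"]) (auto simp: inv_def)

lemma sign_assoc:
  assumes "finite R" "finite U" "finite W" "R \<inter> U = {}" "R \<inter> W = {}" "U \<inter> W = {}"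
  shows "shuffle_sign (R \<union> U) W * shuffle_sign R U = shuffle_sign R (U \<union> W) * shuffle_sign U W"
proof -
  have e1: "inv (R \<union> U) W = inv R W \<union> inv U W" "inv R W \<inter> inv U W = {}"
    using assms by (auto simp: inv_def)
  have e2: "inv R (U \<union> W) = inv R U \<union> inv R W" "inv R U \<inter> inv R W = {}"
    using assms by (auto simp: inv_def)
  have c1: "card (inv (R \<union> U) W) = card (inv R W) + card (inv U W)"
    unfolding e1(1) using e1(2) assms by (intro card_Un_disjoint finite_inv) auto
  have c2: "card (inv R (U \<union> W)) = card (inv R U) + card (inv R W)"
    unfolding e2(1) using e2(2) assms by (intro card_Un_disjoint finite_inv) auto
  show ?thesis unfolding shuffle_sign_inv c1 c2 by (simp add: power_add)
qed

lemma sign_swap: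
  assumes "finite T" "finite U" "T \<inter> U = {}"
  shows "shuffle_sign T U = (-1) ^ (card T * card U) * shuffle_sign U T"
proof -
  have e: "T \<times> U = inv T U \<union> (\<lambda>(i,j). (j,i)) ` inv U T"
    using assms by (auto simp: inv_def image_iff)
  have d: "inv T U \<inter> (\<lambda>(i,j). (j,i)) ` inv U T = {}" by (auto simp: inv_def)
  have "card T * card U = card (inv T U) + card ((\<lambda>(i,j). (j,i)) ` inv U T)"
    unfolding card_cartesian_product[symmetric] e using d assms
    by (intro card_Un_disjoint finite_inv finite_imageI) auto
  also have "card ((\<lambda>(i,j). (j,i)) ` inv U T) = card (inv U T)"
    by (rule card_image) (auto simp: inj_on_def)
  finally have "card T * card U = card (inv T U) + card (inv U T)" .
  hence "(-1::complex) ^ (card T * card U) * shuffle_sign U T = (-1) ^ (card (inv T U) + 2 * card (inv U T))"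
    unfolding shuffle_sign_inv by (simp add: power_add algebra_simps)
  also have "\<dots> = shuffle_sign T U" by (simp add: shuffle_sign_inv power_add power_mult)
  finally show ?thesis by simp
qed

lemma smult_assoc:
  assumes a: "a \<in> Ahat m n" and b: "b \<in> Ahat m n" and c: "c \<in> Ahat m n"
  shows "smult (smult a b) c = smult a (smult b c)"
proof (rule Ahat_eqI[of _ m n])
  show "smult (smult a b) c \<in> Ahat m n" "smult a (smult b c) \<in> Ahat m n"
    using a b c by (auto intro!: smult_Ahat)
  fix \<alpha> S assume v: "valid_idx m n \<alpha> S"
  have finS: "finite S" using v by (rule valid_finiteS)
  have finL: "finite (Le \<alpha>)" using v by (rule valid_finite)
  define F where "F = (\<lambda>x y z R U W. shuffle_sign (R \<union> U) W * shuffle_sign R U * a x R * b y U * c z W)"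
  have "smult (smult a b) c \<alpha> S = (\<Sum>\<beta>\<in>Le \<alpha>. \<Sum>T\<in>Pow S. \<Sum>\<gamma>\<in>Le \<beta>. \<Sum>R\<in>Pow T.
       shuffle_sign T (S - T) * (shuffle_sign R (T - R) * a \<gamma> R * b (\<lambda>i. \<beta> i - \<gamma> i) (T - R)) * c (\<lambda>i. \<alpha> i - \<beta> i) (S - T))"
    unfolding smult_Le by (simp add: sum_distrib_left sum_distrib_right)
  also have "\<dots> = (\<Sum>\<beta>\<in>Le \<alpha>. \<Sum>\<gamma>\<in>Le \<beta>. \<Sum>T\<in>Pow S. \<Sum>R\<in>Pow T.
       F \<gamma> (\<lambda>i. \<beta> i - \<gamma> i) (\<lambda>i. \<alpha> i - \<beta> i) R (T - R) (S - T))"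
  proof (rule sum.cong[OF refl])
    fix \<beta> assume "\<beta> \<in> Le \<alpha>"
    show "(\<Sum>T\<in>Pow S. \<Sum>\<gamma>\<in>Le \<beta>. \<Sum>R\<in>Pow T.
       shuffle_sign T (S - T) * (shuffle_sign R (T - R) * a \<gamma> R * b (\<lambda>i. \<beta> i - \<gamma> i) (T - R)) * c (\<lambda>i. \<alpha> i - \<beta> i) (S - T))
      = (\<Sum>\<gamma>\<in>Le \<beta>. \<Sum>T\<in>Pow S. \<Sum>R\<in>Pow T.
       F \<gamma> (\<lambda>i. \<beta> i - \<gamma> i) (\<lambda>i. \<alpha> i - \<beta> i) R (T - R) (S - T))"
      by (subst sum.swap) (auto intro!: sum.cong simp: F_def Un_absorb1 mult_ac)
  qed
  also have "\<dots> = (\<Sum>\<gamma>\<in>Le \<alpha>. \<Sum>\<delta>\<in>Le (\<lambda>i. \<alpha> i - \<gamma> i). \<Sum>T\<in>Pow S. \<Sum>R\<in>Pow T.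
       F \<gamma> \<delta> (\<lambda>i. \<alpha> i - \<gamma> i - \<delta> i) R (T - R) (S - T))"
    using finL by (rule reindex_N[where G="\<lambda>x y z. \<Sum>T\<in>Pow S. \<Sum>R\<in>Pow T. F x y z R (T - R) (S - T)"])
  also have "\<dots> = (\<Sum>\<gamma>\<in>Le \<alpha>. \<Sum>\<delta>\<in>Le (\<lambda>i. \<alpha> i - \<gamma> i). \<Sum>R\<in>Pow S. \<Sum>U\<in>Pow (S - R).
       F \<gamma> \<delta> (\<lambda>i. \<alpha> i - \<gamma> i - \<delta> i) R U (S - R - U))"
    using finS by (intro sum.cong[OF refl] reindex_P)
  also have "\<dots> = (\<Sum>\<gamma>\<in>Le \<alpha>. \<Sum>R\<in>Pow S. \<Sum>\<delta>\<in>Le (\<lambda>i. \<alpha> i - \<gamma> i). \<Sum>U\<in>Pow (S - R).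
       shuffle_sign R (S - R) * a \<gamma> R * (shuffle_sign U (S - R - U) * b \<delta> U * c (\<lambda>i. \<alpha> i - \<gamma> i - \<delta> i) (S - R - U)))"
  proof (rule sum.cong[OF refl])
    fix \<gamma> assume "\<gamma> \<in> Le \<alpha>"
    have sg: "F x y z R U (S - R - U) = shuffle_sign R (S - R) * a x R * (shuffle_sign U (S - R - U) * b y U * c z (S - R - U))"
      if "R \<subseteq> S" "U \<subseteq> S - R" for x y z R U
    proof -
      have "shuffle_sign (R \<union> U) (S - R - U) * shuffle_sign R U = shuffle_sign R (U \<union> (S - R - U)) * shuffle_sign U (S - R - U)"
        using that finS by (intro sign_assoc) (auto intro: finite_subset)
      moreover have "U \<union> (S - R - U) = S - R" using that by auto
      ultimately show ?thesis unfolding F_def by (simp add: mult_ac)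
    qed
    show "(\<Sum>\<delta>\<in>Le (\<lambda>i. \<alpha> i - \<gamma> i). \<Sum>R\<in>Pow S. \<Sum>U\<in>Pow (S - R).
       F \<gamma> \<delta> (\<lambda>i. \<alpha> i - \<gamma> i - \<delta> i) R U (S - R - U)) = (\<Sum>R\<in>Pow S. \<Sum>\<delta>\<in>Le (\<lambda>i. \<alpha> i - \<gamma> i). \<Sum>U\<in>Pow (S - R).
       shuffle_sign R (S - R) * a \<gamma> R * (shuffle_sign U (S - R - U) * b \<delta> U * c (\<lambda>i. \<alpha> i - \<gamma> i - \<delta> i) (S - R - U)))"
      by (subst sum.swap) (auto intro!: sum.cong simp: sg)
  qed
  also have "\<dots> = smult a (smult b c) \<alpha> S"
    unfolding smult_Le by (simp add: sum_distrib_left)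
  finally show "smult (smult a b) c \<alpha> S = smult a (smult b c) \<alpha> S" .
qed

lemma shuffle_sign_empty[simp]: "shuffle_sign {} U = 1" "shuffle_sign T {} = 1"
  unfolding shuffle_sign_def by simp_all

lemma sone_alt: "sone \<beta> T = (if \<beta> = (\<lambda>_. 0) \<and> T = {} then 1 else 0)"
  unfolding sone_def by (auto simp: fun_eq_iff)

lemma zero_Le[simp]: "(\<lambda>_. 0) \<in> Le \<alpha>" unfolding Le_def by simp
lemma self_Le[simp]: "\<alpha> \<in> Le \<alpha>" unfolding Le_def by simp

lemma smult_sone_left:
  assumes a: "a \<in> Ahat m n"
  shows "smult sone a = a"
proof (rule Ahat_eqI[of _ m n])
  show "smult sone a \<in> Ahat m n" using a by (intro smult_Ahat) (auto simp: Ahat_iff sone_def valid_idx_def)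
  show "a \<in> Ahat m n" by fact
  fix \<alpha> S assume v: "valid_idx m n \<alpha> S"
  have finS: "finite S" using v by (rule valid_finiteS)
  have finL: "finite (Le \<alpha>)" using v by (rule valid_finite)
  have "smult sone a \<alpha> S = (\<Sum>\<beta>\<in>Le \<alpha>. if \<beta> = (\<lambda>_. 0) then (\<Sum>T\<in>Pow S. if T = {} then a \<alpha> S else 0) else 0)"
    unfolding smult_Le sone_alt by (intro sum.cong refl) (auto intro!: sum.cong)
  also have "\<dots> = a \<alpha> S" using finL finS by simp
  finally show "smult sone a \<alpha> S = a \<alpha> S" .
qed

lemma smult_sone_right:
  assumes a: "a \<in> Ahat m n"
  shows "smult a sone = a"
proof (rule Ahat_eqI[of _ m n])
  show "smult a sone \<in> Ahat m n" using a by (intro smult_Ahat) (auto simp: Ahat_iff sone_def valid_idx_def)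
  show "a \<in> Ahat m n" by fact
  fix \<alpha> S assume v: "valid_idx m n \<alpha> S"
  have finS: "finite S" using v by (rule valid_finiteS)
  have finL: "finite (Le \<alpha>)" using v by (rule valid_finite)
  have e1: "(\<lambda>i. \<alpha> i - \<beta> i) = (\<lambda>_. 0) \<longleftrightarrow> \<beta> = \<alpha>" if "\<beta> \<in> Le \<alpha>" for \<beta>
    using that by (auto simp: Le_def fun_eq_iff) (metis antisym diff_is_0_eq)+
  have e2: "S - T = {} \<longleftrightarrow> T = S" if "T \<subseteq> S" for T using that by auto
  have "smult a sone \<alpha> S = (\<Sum>\<beta>\<in>Le \<alpha>. if \<beta> = \<alpha> then (\<Sum>T\<in>Pow S. if T = S then a \<alpha> S else 0) else 0)"
    unfolding smult_Le sone_alt by (intro sum.cong refl) (auto simp: e1 e2 intro!: sum.cong)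
  also have "\<dots> = a \<alpha> S" using finL finS by simp
  finally show "smult a sone \<alpha> S = a \<alpha> S" .
qed

lemma smult_sadd_left: "smult (sadd a b) c = sadd (smult a c) (smult b c)"
  unfolding smult_def sadd_def by (simp add: fun_eq_iff sum.distrib ring_distribs)
lemma smult_sadd_right: "smult c (sadd a b) = sadd (smult c a) (smult c b)"
  unfolding smult_def sadd_def by (simp add: fun_eq_iff sum.distrib ring_distribs)
lemma smult_sscal_left: "smult (sscal z a) b = sscal z (smult a b)"
  unfolding smult_def sscal_def by (simp add: fun_eq_iff sum_distrib_left mult_ac)
lemma smult_sscal_right: "smult a (sscal z b) = sscal z (smult a b)"
  unfolding smult_def sscal_def by (simp add: fun_eq_iff sum_distrib_left mult_ac)
lemma sneg_sscal: "sneg a = sscal (-1) a"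
  unfolding sneg_def sscal_def by simp
lemma smult_szero_left[simp]: "smult szero a = szero"
  unfolding smult_def szero_def by simp
lemma smult_szero_right[simp]: "smult a szero = szero"
  unfolding smult_def szero_def by simp

lemma sadd_Ahat[intro]: "a \<in> Ahat m n \<Longrightarrow> b \<in> Ahat m n \<Longrightarrow> sadd a b \<in> Ahat m n"
  unfolding Ahat_def sadd_def by auto
lemma sscal_Ahat[intro]: "a \<in> Ahat m n \<Longrightarrow> sscal z a \<in> Ahat m n"
  unfolding Ahat_def sscal_def by auto
lemma sneg_Ahat[intro]: "a \<in> Ahat m n \<Longrightarrow> sneg a \<in> Ahat m n"
  unfolding Ahat_def sneg_def by auto
lemma spar_Ahat[intro]: "a \<in> Ahat m n \<Longrightarrow> spar a \<in> Ahat m n"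
  unfolding Ahat_def spar_def by auto
lemma szero_Ahat[intro]: "szero \<in> Ahat m n"
  unfolding Ahat_def szero_def by auto
lemma sone_Ahat[intro]: "sone \<in> Ahat m n"
  unfolding Ahat_def sone_def valid_idx_def by auto

lemma spar_smult: "spar (smult a b) = smult (spar a) (spar b)"
proof (intro ext)
  fix \<alpha> S
  show "spar (smult a b) \<alpha> S = smult (spar a) (spar b) \<alpha> S"
  proof (cases "finite S")
    case True
    have "card S = card T + card (S - T)" if "T \<subseteq> S" for T
      using that True by (metis card_Diff_subset finite_subset le_add_diff_inverse card_mono)
    thus ?thesis unfolding spar_def smult_def
      by (auto simp: sum_distrib_left power_add mult_ac intro!: sum.cong)
  next
    case False
    hence "infinite (Pow S)" by simp
    thus ?thesis unfolding spar_def smult_def by simp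
  qed
qed

definition ev :: "ser \<Rightarrow> ser" where "ev a = (\<lambda>\<alpha> S. if even (card S) then a \<alpha> S else 0)"
definition od :: "ser \<Rightarrow> ser" where "od a = (\<lambda>\<alpha> S. if odd (card S) then a \<alpha> S else 0)"

lemma ev_homog: "a \<in> Ahat m n \<Longrightarrow> homog m n False (ev a)"
  unfolding homog_def ev_def Ahat_def by auto
lemma od_homog: "a \<in> Ahat m n \<Longrightarrow> homog m n True (od a)"
  unfolding homog_def od_def Ahat_def by auto
lemma ev_od: "sadd (ev a) (od a) = a"
  unfolding sadd_def ev_def od_def by (auto simp: fun_eq_iff)
lemma spar_ev_od: "spar a = sadd (ev a) (sneg (od a))"
  unfolding sadd_def ev_def od_def spar_def sneg_def by (auto simp: fun_eq_iff)
lemma homogD: "homog m n p a \<Longrightarrow> a \<in> Ahat m n"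
  unfolding homog_def by simp
lemma homog_zero: "homog m n p a \<Longrightarrow> odd (card S) \<noteq> p \<Longrightarrow> a \<alpha> S = 0"
  unfolding homog_def by simp

lemma spar_homog: "homog m n p a \<Longrightarrow> spar a = sscal (if p then -1 else 1) a"
  unfolding homog_def spar_def sscal_def by (auto simp: fun_eq_iff) (metis neg_one_even_power neg_one_odd_power)+

lemma homog_sadd: "homog m n p a \<Longrightarrow> homog m n p b \<Longrightarrow> homog m n p (sadd a b)"
  unfolding homog_def sadd_def Ahat_def by auto
lemma homog_sscal: "homog m n p a \<Longrightarrow> homog m n p (sscal z a)"
  unfolding homog_def sscal_def Ahat_def by auto
lemma homog_sneg: "homog m n p a \<Longrightarrow> homog m n p (sneg a)"
  unfolding homog_def sneg_def Ahat_def by auto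
lemma homog_szero: "homog m n p szero"
  unfolding homog_def szero_def Ahat_def by auto
lemma homog_sone: "homog m n False sone"
  unfolding homog_def sone_def Ahat_def valid_idx_def by auto
lemma homog_spar: "homog m n p a \<Longrightarrow> homog m n p (spar a)"
  unfolding homog_def spar_def Ahat_def by auto

lemma homog_smult:
  assumes a: "homog m n p a" and b: "homog m n q b"
  shows "homog m n (p \<noteq> q) (smult a b)"
  unfolding homog_def
proof (intro conjI allI impI)
  show "smult a b \<in> Ahat m n" using a b by (intro smult_Ahat homogD)
  fix \<alpha> :: "nat \<Rightarrow> nat" and S :: "nat set" assume par: "odd (card S) \<noteq> (p \<noteq> q)"
  show "smult a b \<alpha> S = 0"
  proof (cases "finite S")
    case False thus ?thesis unfolding smult_def by simp
  next
    case True
    show ?thesis unfolding smult_Le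
    proof (intro sum.neutral ballI)
      fix \<beta> T assume T: "T \<in> Pow S"
      have "card S = card T + card (S - T)"
        using T True by (metis PowD card_Diff_subset finite_subset le_add_diff_inverse card_mono)
      hence "odd (card T) \<noteq> p \<or> odd (card (S - T)) \<noteq> q" using par by auto
      thus "shuffle_sign T (S - T) * a \<beta> T * b (\<lambda>i. \<alpha> i - \<beta> i) (S - T) = 0"
        using homog_zero[OF a] homog_zero[OF b] by auto
    qed
  qed
qed

lemma Le_flip: "finite (Le \<alpha>) \<Longrightarrow> (\<Sum>\<beta>\<in>Le \<alpha>. f \<beta>) = (\<Sum>\<beta>\<in>Le \<alpha>. f (\<lambda>i. \<alpha> i - \<beta> i))"
  by (rule sum.reindex_bij_witness[where i="\<lambda>\<beta> i. \<alpha> i - \<beta> i" and j="\<lambda>\<beta> i. \<alpha> i - \<beta> i"])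
     (auto simp: Le_def fun_eq_iff)

lemma Pow_flip: "finite S \<Longrightarrow> (\<Sum>T\<in>Pow S. f T) = (\<Sum>T\<in>Pow S. f (S - T))"
  by (rule sum.reindex_bij_witness[where i="\<lambda>T. S - T" and j="\<lambda>T. S - T"]) (auto simp: double_diff)

lemma smult_comm:
  assumes a: "homog m n p a" and b: "homog m n q b"
  shows "smult a b = sscal (ssign p q) (smult b a)"
proof (rule Ahat_eqI[of _ m n])
  show "smult a b \<in> Ahat m n" "sscal (ssign p q) (smult b a) \<in> Ahat m n"
    using a b homogD by (auto intro!: smult_Ahat)
  fix \<alpha> S assume v: "valid_idx m n \<alpha> S"
  have finS: "finite S" using v by (rule valid_finiteS)
  have finL: "finite (Le \<alpha>)" using v by (rule valid_finite)
  have "smult b a \<alpha> S = (\<Sum>\<beta>\<in>Le \<alpha>. \<Sum>T\<in>Pow S.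
      shuffle_sign (S - T) (S - (S - T)) * b (\<lambda>i. \<alpha> i - \<beta> i) (S - T) * a (\<lambda>i. \<alpha> i - (\<alpha> i - \<beta> i)) (S - (S - T)))"
    unfolding smult_Le using finS finL
    by (subst Le_flip) (auto intro!: sum.cong Pow_flip)
  also have "\<dots> = (\<Sum>\<beta>\<in>Le \<alpha>. \<Sum>T\<in>Pow S.
      shuffle_sign (S - T) T * b (\<lambda>i. \<alpha> i - \<beta> i) (S - T) * a \<beta> T)"
    by (intro sum.cong refl) (auto simp: Le_def Diff_Diff_Int Int_absorb1 fun_eq_iff)
  finally have ba: "smult b a \<alpha> S = (\<Sum>\<beta>\<in>Le \<alpha>. \<Sum>T\<in>Pow S.
      shuffle_sign (S - T) T * b (\<lambda>i. \<alpha> i - \<beta> i) (S - T) * a \<beta> T)" .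
  have trm: "shuffle_sign T (S - T) * a \<beta> T * b (\<lambda>i. \<alpha> i - \<beta> i) (S - T)
     = ssign p q * (shuffle_sign (S - T) T * b (\<lambda>i. \<alpha> i - \<beta> i) (S - T) * a \<beta> T)" if T: "T \<subseteq> S" for \<beta> T
  proof (cases "a \<beta> T = 0 \<or> b (\<lambda>i. \<alpha> i - \<beta> i) (S - T) = 0")
    case True thus ?thesis by auto
  next
    case False
    hence pT: "odd (card T) = p" and qT: "odd (card (S - T)) = q"
      using homog_zero[OF a] homog_zero[OF b] by blast+
    have fT: "finite T" using T finS by (rule finite_subset)
    have sw: "shuffle_sign T (S - T) = (-1) ^ (card T * card (S - T)) * shuffle_sign (S - T) T"
      using fT finS by (intro sign_swap) auto
    have "(-1::complex) ^ (card T * card (S - T)) = ssign p q"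
      using pT qT unfolding ssign_def by (auto simp: power_mult)
    thus ?thesis unfolding sw by (simp add: mult_ac)
  qed
  show "smult a b \<alpha> S = sscal (ssign p q) (smult b a) \<alpha> S"
    unfolding sscal_def ba unfolding smult_Le sum_distrib_left
    by (intro sum.cong refl) (auto simp: trm)
qed

lemma smult_odd_sq:
  assumes "homog m n True h"
  shows "smult h h = szero"
proof -
  have "smult h h = sscal (-1) (smult h h)" using smult_comm[OF assms assms] by (simp add: ssign_def)
  thus ?thesis unfolding sscal_def szero_def by (auto simp: fun_eq_iff)
qed

lemmas pw = sadd_def sneg_def sscal_def szero_def fun_eq_iff

lemma sadd_szero[simp]: "sadd szero a = a" "sadd a szero = a" by (simp_all add: pw)
lemma sneg_szero[simp]: "sneg szero = szero" by (simp add: pw)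
lemma sscal_szero[simp]: "sscal z szero = szero" "sscal 0 a = szero" by (simp_all add: pw)
lemma sscal_one[simp]: "sscal 1 a = a" by (simp add: pw)
lemma spar_sadd: "spar (sadd a b) = sadd (spar a) (spar b)" by (simp add: pw spar_def algebra_simps)
lemma spar_sscal: "spar (sscal z a) = sscal z (spar a)" by (simp add: pw spar_def algebra_simps)
lemma smult_sneg_left: "smult (sneg a) b = sneg (smult a b)" by (simp add: sneg_sscal smult_sscal_left)
lemma smult_sneg_right: "smult a (sneg b) = sneg (smult a b)" by (simp add: sneg_sscal smult_sscal_right)

locale pb =
  fixes m n :: nat and br :: "ser \<Rightarrow> ser \<Rightarrow> ser"
  assumes P: "poisson_bracket m n br"
begin

abbreviation "A \<equiv> Ahat m n"

lemmas PP = P[unfolded poisson_bracket_def]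

lemma br_Ahat[intro]: "a \<in> A \<Longrightarrow> b \<in> A \<Longrightarrow> br a b \<in> A"
  using PP[THEN conjunct1] by blast
lemma br_add_left: "a \<in> A \<Longrightarrow> b \<in> A \<Longrightarrow> c \<in> A \<Longrightarrow> br (sadd a b) c = sadd (br a c) (br b c)"
  using PP[THEN conjunct2, THEN conjunct1] by blast
lemma br_add_right: "a \<in> A \<Longrightarrow> b \<in> A \<Longrightarrow> c \<in> A \<Longrightarrow> br c (sadd a b) = sadd (br c a) (br c b)"
  using PP[THEN conjunct2, THEN conjunct1] by blast
lemma br_scal_left: "a \<in> A \<Longrightarrow> b \<in> A \<Longrightarrow> br (sscal z a) b = sscal z (br a b)"
  using PP[THEN conjunct2, THEN conjunct2, THEN conjunct1] by blast
lemma br_scal_right: "a \<in> A \<Longrightarrow> b \<in> A \<Longrightarrow> br a (sscal z b) = sscal z (br a b)"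
  using PP[THEN conjunct2, THEN conjunct2, THEN conjunct1] by blast
lemma br_homog: "homog m n p a \<Longrightarrow> homog m n q b \<Longrightarrow> homog m n (p \<noteq> q) (br a b)"
  using PP[THEN conjunct2, THEN conjunct2, THEN conjunct2, THEN conjunct1] by blast
lemma br_anti: "homog m n p a \<Longrightarrow> homog m n q b \<Longrightarrow> br a b = sneg (sscal (ssign p q) (br b a))"
  using PP[THEN conjunct2, THEN conjunct2, THEN conjunct2, THEN conjunct2, THEN conjunct1] by blast
lemma br_leib: "homog m n p a \<Longrightarrow> homog m n q b \<Longrightarrow> c \<in> A \<Longrightarrow>
        br a (smult b c) = sadd (smult (br a b) c) (sscal (ssign p q) (smult b (br a c)))"
  using PP[THEN conjunct2, THEN conjunct2, THEN conjunct2, THEN conjunct2, THEN conjunct2, THEN conjunct1] by blast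
lemma br_jac: "homog m n p a \<Longrightarrow> homog m n q b \<Longrightarrow> c \<in> A \<Longrightarrow>
        br a (br b c) = sadd (br (br a b) c) (sscal (ssign p q) (br b (br a c)))"
  using PP[THEN conjunct2, THEN conjunct2, THEN conjunct2, THEN conjunct2, THEN conjunct2, THEN conjunct2, THEN conjunct1] by blast

lemma br_neg_left: "a \<in> A \<Longrightarrow> b \<in> A \<Longrightarrow> br (sneg a) b = sneg (br a b)"
  by (simp add: sneg_sscal br_scal_left)
lemma br_neg_right: "a \<in> A \<Longrightarrow> b \<in> A \<Longrightarrow> br a (sneg b) = sneg (br a b)"
  by (simp add: sneg_sscal br_scal_right)
lemma br_zero_left[simp]: "b \<in> A \<Longrightarrow> br szero b = szero"
  using br_scal_left[of szero b 0] by auto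
lemma br_zero_right[simp]: "a \<in> A \<Longrightarrow> br a szero = szero"
  using br_scal_right[of a szero 0] by auto

lemma x_eq_2x: assumes "x = sadd x x" shows "x = szero"
proof (rule ext)+
  fix \<alpha> S have "x \<alpha> S = x \<alpha> S + x \<alpha> S" using fun_cong[OF fun_cong[OF assms, of \<alpha>], of S] by (simp add: sadd_def)
  thus "x \<alpha> S = szero \<alpha> S" by (simp add: szero_def)
qed
lemma x_eq_negx: assumes "x = sneg x" shows "x = szero"
proof (rule ext)+
  fix \<alpha> S have "x \<alpha> S = - x \<alpha> S" using fun_cong[OF fun_cong[OF assms, of \<alpha>], of S] by (simp add: sneg_def)
  thus "x \<alpha> S = szero \<alpha> S" by (simp add: szero_def)
qed

lemma br_sone_right_h: "homog m n p a \<Longrightarrow> br a sone = szero"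
proof -
  assume a: "homog m n p a"
  have "br a (smult sone sone) = sadd (smult (br a sone) sone) (sscal (ssign p False) (smult sone (br a sone)))"
    using br_leib[OF a homog_sone] by blast
  moreover have "br a sone \<in> A" using a homogD by blast
  ultimately have "br a sone = sadd (br a sone) (br a sone)"
    by (simp add: smult_sone_left[of _ m n] smult_sone_right[of _ m n] sone_Ahat ssign_def)
  thus ?thesis by (rule x_eq_2x)
qed

lemma br_sone_left_h: "homog m n p a \<Longrightarrow> br sone a = szero"
proof -
  assume a: "homog m n p a"
  have "br sone a = sneg (sscal (ssign False p) (br a sone))" by (rule br_anti[OF homog_sone a])
  also have "\<dots> = szero" by (simp only: br_sone_right_h[OF a] sscal_szero sneg_szero)
  finally show ?thesis .
qed

lemma ev_Ahat[intro]: "a \<in> A \<Longrightarrow> ev a \<in> A" using ev_homog homogD by blast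
lemma od_Ahat[intro]: "a \<in> A \<Longrightarrow> od a \<in> A" using od_homog homogD by blast

lemma br_sone_left: "a \<in> A \<Longrightarrow> br sone a = szero"
proof -
  assume a: "a \<in> A"
  have "br sone a = br sone (sadd (ev a) (od a))" by (simp only: ev_od)
  also have "\<dots> = sadd (br sone (ev a)) (br sone (od a))"
    using a by (intro br_add_right ev_Ahat od_Ahat sone_Ahat)
  also have "\<dots> = szero" by (simp only: br_sone_left_h[OF ev_homog[OF a]] br_sone_left_h[OF od_homog[OF a]] sadd_szero)
  finally show ?thesis .
qed

lemma smult_Ahat'[intro]: "a \<in> A \<Longrightarrow> b \<in> A \<Longrightarrow> smult a b \<in> A" by (rule smult_Ahat)

lemma homog_sum_zero:
  assumes "homog m n True x" "homog m n False y" "sadd x y = szero"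
  shows "x = szero \<and> y = szero"
proof -
  have "\<forall>\<alpha> S. x \<alpha> S = 0 \<and> y \<alpha> S = 0"
  proof (intro allI)
    fix \<alpha> S
    have "x \<alpha> S + y \<alpha> S = 0" using fun_cong[OF fun_cong[OF assms(3), of \<alpha>], of S] by (simp add: sadd_def szero_def)
    thus "x \<alpha> S = 0 \<and> y \<alpha> S = 0"
      using homog_zero[OF assms(1), of S \<alpha>] homog_zero[OF assms(2), of S \<alpha>] by (cases "odd (card S)") auto
  qed
  thus ?thesis by (auto simp: szero_def fun_eq_iff)
qed

lemma comm_odd:
  assumes h: "homog m n True h" and a: "a \<in> A"
  shows "smult a h = smult h (spar a)"
proof -
  have "smult a h = smult (sadd (ev a) (od a)) h" by (simp only: ev_od)
  also have "\<dots> = sadd (smult (ev a) h) (smult (od a) h)" by (rule smult_sadd_left)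
  also have "\<dots> = sadd (smult h (ev a)) (sneg (smult h (od a)))"
    using smult_comm[OF ev_homog[OF a] h] smult_comm[OF od_homog[OF a] h]
    by (simp add: ssign_def sneg_sscal)
  also have "\<dots> = smult h (spar a)" by (simp add: spar_ev_od smult_sadd_right smult_sneg_right)
  finally show ?thesis .
qed

lemma comm_even:
  assumes v: "homog m n False v" and a: "homog m n p a"
  shows "smult a v = smult v a"
  using smult_comm[OF a v] by (simp add: ssign_def)

end

locale pbh = pb +
  fixes h :: ser
  assumes hodd: "homog m n True h" and hh: "br h h = sone"
begin

lemma hA[intro]: "h \<in> A" using hodd by (rule homogD)

lemma D_sq: assumes c: "c \<in> A" shows "br h (br h c) = szero"
proof -
  have "br h (br h c) = sadd (br (br h h) c) (sscal (ssign True True) (br h (br h c)))"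
    by (rule br_jac[OF hodd hodd c])
  also have "\<dots> = sneg (br h (br h c))"
    by (simp only: hh br_sone_left[OF c] sadd_szero) (simp add: ssign_def sneg_sscal)
  finally show ?thesis by (rule x_eq_negx)
qed

lemma D_hmult: assumes b: "b \<in> A" shows "br h (smult h b) = sadd b (sneg (smult h (br h b)))"
proof -
  have "br h (smult h b) = sadd (smult (br h h) b) (sscal (ssign True True) (smult h (br h b)))"
    by (rule br_leib[OF hodd hodd b])
  thus ?thesis by (simp only: hh smult_sone_left[OF b]) (simp add: ssign_def sneg_sscal)
qed

lemma comp:
  assumes b: "b \<in> A" and Db: "br h b = szero"
  shows "br h (ev b) = szero" "br h (od b) = szero"
proof -
  have "sadd (br h (ev b)) (br h (od b)) = br h (sadd (ev b) (od b))"
    using b by (intro br_add_right[symmetric] ev_Ahat od_Ahat hA)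
  also have "\<dots> = szero" by (simp only: ev_od Db)
  finally have s: "sadd (br h (ev b)) (br h (od b)) = szero" .
  have "homog m n (True \<noteq> False) (br h (ev b))" by (rule br_homog[OF hodd ev_homog[OF b]])
  hence e: "homog m n True (br h (ev b))" by simp
  have "homog m n (True \<noteq> True) (br h (od b))" by (rule br_homog[OF hodd od_homog[OF b]])
  hence o: "homog m n False (br h (od b))" by simp
  from homog_sum_zero[OF e o s] show "br h (ev b) = szero" "br h (od b) = szero" by auto
qed

lemma a_lem_h:
  assumes b0: "homog m n p b0" and D0: "br h b0 = szero" and c: "c \<in> A"
  shows "br b0 (smult h c) = smult h (br (spar b0) c)"
proof -
  have b0A: "b0 \<in> A" using b0 by (rule homogD)
  have "br b0 (smult h c) = sadd (smult (br b0 h) c) (sscal (ssign p True) (smult h (br b0 c)))"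
    by (rule br_leib[OF b0 hodd c])
  also have "br b0 h = sneg (sscal (ssign p True) (br h b0))" by (rule br_anti[OF b0 hodd])
  also have "\<dots> = szero" by (simp only: D0 sscal_szero sneg_szero)
  also have "sadd (smult szero c) (sscal (ssign p True) (smult h (br b0 c))) = smult h (br (sscal (ssign p True) b0) c)"
    by (simp only: smult_szero_left sadd_szero br_scal_left[OF b0A c] smult_sscal_right)
  also have "sscal (ssign p True) b0 = spar b0" by (simp add: spar_homog[OF b0] ssign_def)
  finally show ?thesis .
qed

lemma a_lem:
  assumes b0: "b0 \<in> A" and D0: "br h b0 = szero" and c: "c \<in> A"
  shows "br b0 (smult h c) = smult h (br (spar b0) c)"
proof -
  have hc: "smult h c \<in> A" using c by blast
  have "br b0 (smult h c) = br (sadd (ev b0) (od b0)) (smult h c)" by (simp only: ev_od)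
  also have "\<dots> = sadd (br (ev b0) (smult h c)) (br (od b0) (smult h c))"
    using b0 hc by (intro br_add_left ev_Ahat od_Ahat)
  also have "\<dots> = sadd (smult h (br (spar (ev b0)) c)) (smult h (br (spar (od b0)) c))"
    by (simp only: a_lem_h[OF ev_homog[OF b0] comp(1)[OF b0 D0] c] a_lem_h[OF od_homog[OF b0] comp(2)[OF b0 D0] c])
  also have "\<dots> = smult h (br (sadd (spar (ev b0)) (spar (od b0))) c)"
    using b0 c by (simp only: smult_sadd_right br_add_left spar_Ahat ev_Ahat od_Ahat)
  also have "sadd (spar (ev b0)) (spar (od b0)) = spar b0" by (simp only: spar_sadd[symmetric] ev_od)
  finally show ?thesis .
qed

lemma b_lem_h:
  assumes b: "homog m n q b" and c: "homog m n r c" and Dc: "br h c = szero"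
  shows "br (smult h b) c = smult h (br b c)"
proof -
  have hb: "homog m n (True \<noteq> q) (smult h b)" by (rule homog_smult[OF hodd b])
  have bA: "b \<in> A" using b by (rule homogD)
  have cA: "c \<in> A" using c by (rule homogD)
  have "br (smult h b) c = sneg (sscal (ssign (True \<noteq> q) r) (br c (smult h b)))"
    by (rule br_anti[OF hb c])
  also have "br c (smult h b) = sadd (smult (br c h) b) (sscal (ssign r True) (smult h (br c b)))"
    by (rule br_leib[OF c hodd bA])
  also have "br c h = sneg (sscal (ssign r True) (br h c))" by (rule br_anti[OF c hodd])
  also have "\<dots> = szero" by (simp only: Dc sscal_szero sneg_szero)
  also have "br c b = sneg (sscal (ssign r q) (br b c))" by (rule br_anti[OF c b])
  finally have e: "br (smult h b) c = sneg (sscal (ssign (True \<noteq> q) r)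
      (sadd (smult szero b) (sscal (ssign r True) (smult h (sneg (sscal (ssign r q) (br b c)))))))" .
  show ?thesis unfolding e
    by (simp only: smult_szero_left sadd_szero smult_sneg_right smult_sscal_right) (cases q; cases r; simp add: ssign_def pw)
qed

lemma b_lem1:
  assumes b: "b \<in> A" and c: "homog m n r c" and Dc: "br h c = szero"
  shows "br (smult h b) c = smult h (br b c)"
proof -
  have cA: "c \<in> A" using c by (rule homogD)
  have "br (smult h b) c = br (sadd (smult h (ev b)) (smult h (od b))) c" by (simp only: smult_sadd_right[symmetric] ev_od)
  also have "\<dots> = sadd (br (smult h (ev b)) c) (br (smult h (od b)) c)"
    using b cA by (intro br_add_left smult_Ahat ev_Ahat od_Ahat hA)
  also have "\<dots> = sadd (smult h (br (ev b) c)) (smult h (br (od b) c))"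
    by (simp only: b_lem_h[OF ev_homog[OF b] c Dc] b_lem_h[OF od_homog[OF b] c Dc])
  also have "\<dots> = smult h (br (sadd (ev b) (od b)) c)"
    using b cA by (simp only: smult_sadd_right br_add_left ev_Ahat od_Ahat)
  finally show ?thesis by (simp only: ev_od)
qed

lemma b_lem:
  assumes b: "b \<in> A" and c: "c \<in> A" and Dc: "br h c = szero"
  shows "br (smult h b) c = smult h (br b c)"
proof -
  have hb: "smult h b \<in> A" using b by blast
  have "br (smult h b) c = br (smult h b) (sadd (ev c) (od c))" by (simp only: ev_od)
  also have "\<dots> = sadd (br (smult h b) (ev c)) (br (smult h b) (od c))"
    using hb c by (intro br_add_right ev_Ahat od_Ahat)
  also have "\<dots> = sadd (smult h (br b (ev c))) (smult h (br b (od c)))"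
    by (simp only: b_lem1[OF b ev_homog[OF c] comp(1)[OF c Dc]] b_lem1[OF b od_homog[OF c] comp(2)[OF c Dc]])
  also have "\<dots> = smult h (br b (sadd (ev c) (od c)))"
    using b c by (simp only: smult_sadd_right br_add_right ev_Ahat od_Ahat)
  finally show ?thesis by (simp only: ev_od)
qed

lemma hh0: "smult h h = szero" by (rule smult_odd_sq[OF hodd])

lemma hhx: "x \<in> A \<Longrightarrow> smult h (smult h x) = szero"
  by (simp only: smult_assoc[OF hA hA, symmetric] hh0 smult_szero_left)

lemma c_lem_h:
  assumes b1: "homog m n q b1" and D1: "br h b1 = szero" and b1': "b1' \<in> A" and D1': "br h b1' = szero"
  shows "br (smult h b1) (smult h b1') = smult (spar b1) b1'"
proof -
  have hb: "homog m n (True \<noteq> q) (smult h b1)" by (rule homog_smult[OF hodd b1])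
  have bA: "b1 \<in> A" using b1 by (rule homogD)
  have "br (smult h b1) (smult h b1') = sadd (smult (br (smult h b1) h) b1')
         (sscal (ssign (True \<noteq> q) True) (smult h (br (smult h b1) b1')))"
    by (rule br_leib[OF hb hodd b1'])
  also have "br (smult h b1) h = sneg (sscal (ssign (True \<noteq> q) True) (br h (smult h b1)))"
    by (rule br_anti[OF hb hodd])
  also have "br h (smult h b1) = b1" by (simp only: D_hmult[OF bA] D1 smult_szero_right sneg_szero sadd_szero)
  also have "br (smult h b1) b1' = smult h (br b1 b1')" by (rule b_lem[OF bA b1' D1'])
  also have "smult h (smult h (br b1 b1')) = szero" using bA b1' by (intro hhx br_Ahat)
  finally have e: "br (smult h b1) (smult h b1') = sadd (smult (sneg (sscal (ssign (True \<noteq> q) True) b1)) b1')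
         (sscal (ssign (True \<noteq> q) True) szero)" .
  show ?thesis unfolding e spar_homog[OF b1]
    by (simp only: smult_sneg_left smult_sscal_left) (cases q; simp add: ssign_def pw)
qed

lemma c_lem:
  assumes b1: "b1 \<in> A" and D1: "br h b1 = szero" and b1': "b1' \<in> A" and D1': "br h b1' = szero"
  shows "br (smult h b1) (smult h b1') = smult (spar b1) b1'"
proof -
  have hb: "smult h b1' \<in> A" using b1' by blast
  have "br (smult h b1) (smult h b1') = br (sadd (smult h (ev b1)) (smult h (od b1))) (smult h b1')"
    by (simp only: smult_sadd_right[symmetric] ev_od)
  also have "\<dots> = sadd (br (smult h (ev b1)) (smult h b1')) (br (smult h (od b1)) (smult h b1'))"
    using b1 b1' hb by (intro br_add_left smult_Ahat ev_Ahat od_Ahat hA)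
  also have "\<dots> = sadd (smult (spar (ev b1)) b1') (smult (spar (od b1)) b1')"
    by (simp only: c_lem_h[OF ev_homog[OF b1] comp(1)[OF b1 D1] b1' D1'] c_lem_h[OF od_homog[OF b1] comp(2)[OF b1 D1] b1' D1'])
  also have "\<dots> = smult (spar b1) b1'"
    by (simp only: smult_sadd_left[symmetric] spar_sadd[symmetric] ev_od)
  finally show ?thesis .
qed

end

context pbh
begin

definition B1 where "B1 = {b \<in> A. br h b = szero}"
definition phi where "phi x = sadd (fst x) (smult h (snd x))"

lemma B1D: "b \<in> B1 \<Longrightarrow> b \<in> A" "b \<in> B1 \<Longrightarrow> br h b = szero" unfolding B1_def by auto

lemma phi_A: "x \<in> B1 \<times> B1 \<Longrightarrow> phi x \<in> A"
  unfolding phi_def using B1D by (cases x) (auto intro!: sadd_Ahat smult_Ahat)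

lemma D_phi: assumes "x \<in> B1 \<times> B1" shows "br h (phi x) = snd x"
proof -
  obtain b0 b1 where x: "x = (b0, b1)" by (cases x)
  have b: "b0 \<in> A" "br h b0 = szero" "b1 \<in> A" "br h b1 = szero" using assms x B1D by auto
  have "br h (phi x) = sadd (br h b0) (br h (smult h b1))"
    unfolding phi_def x fst_conv snd_conv using b by (intro br_add_right hA smult_Ahat)
  also have "\<dots> = b1" by (simp only: b(2) D_hmult[OF b(3)] b(4) smult_szero_right sneg_szero sadd_szero)
  finally show ?thesis using x by simp
qed

lemma sadd_cancel: "sadd a c = sadd b c \<Longrightarrow> a = b"
proof (rule ext)+
  fix \<alpha> S assume e: "sadd a c = sadd b c"
  show "a \<alpha> S = b \<alpha> S" using fun_cong[OF fun_cong[OF e, of \<alpha>], of S] by (simp add: sadd_def)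
qed

lemma phi_inj: "inj_on phi (B1 \<times> B1)"
proof (rule inj_onI)
  fix x y assume x: "x \<in> B1 \<times> B1" and y: "y \<in> B1 \<times> B1" and e: "phi x = phi y"
  have s: "snd x = snd y" using D_phi[OF x] D_phi[OF y] e by simp
  have "fst x = fst y" using e unfolding phi_def s by (rule sadd_cancel)
  with s show "x = y" by (simp add: prod_eq_iff)
qed

lemma phi_surj: "phi ` (B1 \<times> B1) = A"
proof
  show "phi ` (B1 \<times> B1) \<subseteq> A" using phi_A by blast
  show "A \<subseteq> phi ` (B1 \<times> B1)"
  proof
    fix a assume a: "a \<in> A"
    define b1 where "b1 = br h a"
    define b0 where "b0 = sadd a (sneg (smult h b1))"
    have b1A: "b1 \<in> A" unfolding b1_def using a by blast
    have hb1: "smult h b1 \<in> A" using b1A by blast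
    have b0A: "b0 \<in> A" unfolding b0_def using a hb1 by blast
    have D1: "br h b1 = szero" unfolding b1_def by (rule D_sq[OF a])
    have "br h b0 = sadd (br h a) (sneg (br h (smult h b1)))"
      unfolding b0_def using a hb1 by (simp only: br_add_right br_neg_right sneg_Ahat hA)
    also have "\<dots> = szero" by (simp only: D_hmult[OF b1A] D1 smult_szero_right sneg_szero sadd_szero b1_def[symmetric]) (simp add: pw)
    finally have D0: "br h b0 = szero" .
    have "(b0, b1) \<in> B1 \<times> B1" using b0A b1A D0 D1 unfolding B1_def by auto
    moreover have "phi (b0, b1) = a" unfolding phi_def b0_def by (simp add: pw)
    ultimately show "a \<in> phi ` (B1 \<times> B1)" by force
  qed
qed

lemma part2:
  "let B1 = {b \<in> Ahat m n. br h b = szero};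
       \<phi> = (\<lambda>x. sadd (fst x) (smult h (snd x)))
   in bij_betw \<phi> (B1 \<times> B1) (Ahat m n) \<and>
      \<phi> tone = sone \<and>
      (\<forall>x\<in>B1 \<times> B1. \<forall>y\<in>B1 \<times> B1.
         \<phi> (tadd x y) = sadd (\<phi> x) (\<phi> y) \<and>
         \<phi> (tmult x y) = smult (\<phi> x) (\<phi> y) \<and>
         \<phi> (tbr br x y) = br (\<phi> x) (\<phi> y)) \<and>
      (\<forall>c. \<forall>x\<in>B1 \<times> B1. \<phi> (tscal c x) = sscal c (\<phi> x)) \<and>
      (\<forall>x\<in>B1 \<times> B1. \<phi> (tpar x) = spar (\<phi> x))"
  unfolding Let_def B1_def[symmetric] phi_def[symmetric, abs_def]
proof (intro conjI ballI allI)
  show "bij_betw phi (B1 \<times> B1) A" unfolding bij_betw_def using phi_inj phi_surj by blast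
  show "phi tone = sone" unfolding phi_def tone_def by simp
  fix x y assume x: "x \<in> B1 \<times> B1" and y: "y \<in> B1 \<times> B1"
  obtain b0 b1 where xe: "x = (b0, b1)" by (cases x)
  obtain c0 c1 where ye: "y = (c0, c1)" by (cases y)
  have b: "b0 \<in> A" "br h b0 = szero" "b1 \<in> A" "br h b1 = szero" using x xe B1D by auto
  have c: "c0 \<in> A" "br h c0 = szero" "c1 \<in> A" "br h c1 = szero" using y ye B1D by auto
  show "phi (tadd x y) = sadd (phi x) (phi y)"
    unfolding phi_def tadd_def xe ye by (simp add: smult_sadd_right) (simp add: pw)
  show "phi (tmult x y) = smult (phi x) (phi y)"
  proof -
    have e1: "smult b0 (smult h c1) = smult h (smult (spar b0) c1)"
      by (simp only: smult_assoc[OF b(1) hA c(3), symmetric] comm_odd[OF hodd b(1)] smult_assoc[OF hA spar_Ahat[OF b(1)] c(3)])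
    have e2: "smult (smult h b1) c0 = smult h (smult b1 c0)" by (rule smult_assoc[OF hA b(3) c(1)])
    have e3: "smult (smult h b1) (smult h c1) = szero"
    proof -
      have "smult (smult h b1) (smult h c1) = smult h (smult (smult b1 h) c1)"
        by (simp only: smult_assoc[OF hA b(3) smult_Ahat[OF hA c(3)]] smult_assoc[OF b(3) hA c(3)])
      also have "\<dots> = smult h (smult h (smult (spar b1) c1))"
        by (simp only: comm_odd[OF hodd b(3)] smult_assoc[OF hA spar_Ahat[OF b(3)] c(3)])
      also have "\<dots> = szero" using b c by (intro hhx smult_Ahat spar_Ahat)
      finally show ?thesis .
    qed
    show ?thesis unfolding phi_def tmult_def xe ye fst_conv snd_conv
      by (simp only: smult_sadd_left smult_sadd_right e1 e2 e3) (simp add: pw)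
  qed
  show "phi (tbr br x y) = br (phi x) (phi y)"
  proof -
    have hb1: "smult h b1 \<in> A" "smult h c1 \<in> A" using b c by blast+
    have "br (phi x) (phi y) = sadd (sadd (br b0 c0) (br b0 (smult h c1))) (sadd (br (smult h b1) c0) (br (smult h b1) (smult h c1)))"
      unfolding phi_def xe ye fst_conv snd_conv using b c hb1
      by (simp only: br_add_left br_add_right sadd_Ahat) (simp add: pw)
    also have "\<dots> = sadd (sadd (br b0 c0) (smult h (br (spar b0) c1))) (sadd (smult h (br b1 c0)) (smult (spar b1) c1))"
      by (simp only: a_lem[OF b(1) b(2) c(3)] b_lem[OF b(3) c(1) c(2)] c_lem[OF b(3) b(4) c(3) c(4)])
    also have "\<dots> = phi (tbr br x y)"
      unfolding phi_def tbr_def xe ye fst_conv snd_conv by (simp only: smult_sadd_right) (simp add: pw)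
    finally show ?thesis by simp
  qed
next
  fix z x assume x: "x \<in> B1 \<times> B1"
  show "phi (tscal z x) = sscal z (phi x)"
    unfolding phi_def tscal_def by (simp add: smult_sscal_right) (simp add: pw algebra_simps)
next
  fix x assume x: "x \<in> B1 \<times> B1"
  show "phi (tpar x) = spar (phi x)"
    unfolding phi_def tpar_def
    by (simp add: spar_sadd spar_smult spar_homog[OF hodd] smult_sscal_left smult_sneg_right) (simp add: pw spar_def)
qed

end

definition sdeg :: "nat \<Rightarrow> (nat \<Rightarrow> nat) \<Rightarrow> nat set \<Rightarrow> nat" where
  "sdeg m \<alpha> S = (\<Sum>i<m. \<alpha> i) + card S"

lemma mhat_iff: "a \<in> mhat m n k \<longleftrightarrow> a \<in> Ahat m n \<and> (\<forall>\<alpha> S. sdeg m \<alpha> S < k \<longrightarrow> a \<alpha> S = 0)"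
  unfolding mhat_def sdeg_def by simp

lemma mhatD: "a \<in> mhat m n k \<Longrightarrow> sdeg m \<alpha> S < k \<Longrightarrow> a \<alpha> S = 0"
  unfolding mhat_iff by blast
lemma mhat_A: "a \<in> mhat m n k \<Longrightarrow> a \<in> Ahat m n"
  unfolding mhat_iff by blast

lemma sdeg_split:
  assumes "\<beta> \<in> Le \<alpha>" "T \<subseteq> S" "finite S"
  shows "sdeg m \<alpha> S = sdeg m \<beta> T + sdeg m (\<lambda>i. \<alpha> i - \<beta> i) (S - T)"
proof -
  have "(\<Sum>i<m. \<alpha> i) = (\<Sum>i<m. \<beta> i) + (\<Sum>i<m. \<alpha> i - \<beta> i)"
    using assms(1) by (simp add: Le_def sum.distrib[symmetric])
  moreover have "card S = card T + card (S - T)"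
    using assms by (metis card_Diff_subset finite_subset le_add_diff_inverse card_mono)
  ultimately show ?thesis unfolding sdeg_def by simp
qed

lemma mhat_mult:
  assumes a: "a \<in> mhat m n i" and b: "b \<in> mhat m n j"
  shows "smult a b \<in> mhat m n (i + j)"
  unfolding mhat_iff
proof (intro conjI allI impI)
  have aA: "a \<in> Ahat m n" and bA: "b \<in> Ahat m n" using a b mhat_A by blast+
  show sA: "smult a b \<in> Ahat m n" using aA bA by (rule smult_Ahat)
  fix \<alpha> S assume d: "sdeg m \<alpha> S < i + j"
  show "smult a b \<alpha> S = 0"
  proof (cases "valid_idx m n \<alpha> S")
    case False thus ?thesis using sA AhatD by blast
  next
    case True
    hence fS: "finite S" by (rule valid_finiteS)
    show ?thesis unfolding smult_Le
    proof (intro sum.neutral ballI)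
      fix \<beta> T assume \<beta>: "\<beta> \<in> Le \<alpha>" and T: "T \<in> Pow S"
      have "sdeg m \<beta> T < i \<or> sdeg m (\<lambda>i. \<alpha> i - \<beta> i) (S - T) < j"
        using sdeg_split[OF \<beta> _ fS, of T m] T d by auto
      thus "shuffle_sign T (S - T) * a \<beta> T * b (\<lambda>i. \<alpha> i - \<beta> i) (S - T) = 0"
        using mhatD[OF a] mhatD[OF b] by auto
    qed
  qed
qed

lemma mhat0: "a \<in> Ahat m n \<Longrightarrow> a \<in> mhat m n 0" unfolding mhat_iff by simp

definition spow :: "ser \<Rightarrow> nat \<Rightarrow> ser" where "spow s k = ((smult s) ^^ k) sone"

lemma spow_0[simp]: "spow s 0 = sone" unfolding spow_def by simp
lemma spow_Suc: "spow s (Suc k) = smult s (spow s k)" unfolding spow_def by simp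

lemma spow_A: "s \<in> Ahat m n \<Longrightarrow> spow s k \<in> Ahat m n"
  by (induction k) (auto simp: spow_Suc intro!: smult_Ahat)

lemma spow_mhat: "s \<in> mhat m n 1 \<Longrightarrow> spow s k \<in> mhat m n k"
proof (induction k)
  case 0 thus ?case by (simp add: mhat0 sone_Ahat)
next
  case (Suc k)
  have "smult s (spow s k) \<in> mhat m n (1 + k)" using Suc by (intro mhat_mult) auto
  thus ?case by (simp add: spow_Suc)
qed

lemma spow_homog: "homog m n False s \<Longrightarrow> homog m n False (spow s k)"
proof (induction k)
  case 0 thus ?case by (simp add: homog_sone)
next
  case (Suc k) thus ?case using homog_smult[of m n False s False "spow s k"] by (simp add: spow_Suc)
qed

lemma spow_add: "s \<in> Ahat m n \<Longrightarrow> spow s (i + j) = smult (spow s i) (spow s j)"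
proof (induction i)
  case 0 thus ?case by (simp add: smult_sone_left[OF spow_A])
next
  case (Suc i)
  thus ?case by (simp add: spow_Suc smult_assoc[OF _ spow_A spow_A])
qed

definition sev :: "nat \<Rightarrow> complex fps \<Rightarrow> ser \<Rightarrow> ser" where
  "sev m F s = (\<lambda>\<alpha> S. \<Sum>k\<le>sdeg m \<alpha> S. fps_nth F k * spow s k \<alpha> S)"

lemma sev_alt:
  assumes s: "s \<in> mhat m n 1" and N: "sdeg m \<alpha> S \<le> N"
  shows "sev m F s \<alpha> S = (\<Sum>k\<le>N. fps_nth F k * spow s k \<alpha> S)"
  unfolding sev_def
proof (rule sum.mono_neutral_left)
  show "\<forall>i\<in>{..N} - {..sdeg m \<alpha> S}. fps_nth F i * spow s i \<alpha> S = 0"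
    using mhatD[OF spow_mhat[OF s]] by auto
qed (use N in auto)

lemma sev_A: "s \<in> mhat m n 1 \<Longrightarrow> sev m F s \<in> Ahat m n"
  unfolding Ahat_iff sev_def using AhatD[OF spow_A[OF mhat_A]] by (auto intro!: sum.neutral)

lemma sev_homog: "s \<in> mhat m n 1 \<Longrightarrow> homog m n False s \<Longrightarrow> homog m n False (sev m F s)"
  unfolding homog_def[of m n False "sev m F s"] using sev_A[of s m n F] homog_zero[OF spow_homog]
  by (auto simp: sev_def intro!: sum.neutral)

lemma sdeg_le: "\<beta> \<in> Le \<alpha> \<Longrightarrow> T \<subseteq> S \<Longrightarrow> finite S \<Longrightarrow> sdeg m \<beta> T \<le> sdeg m \<alpha> S"
  using sdeg_split by fastforce
lemma sdeg_le2: "\<beta> \<in> Le \<alpha> \<Longrightarrow> T \<subseteq> S \<Longrightarrow> finite S \<Longrightarrow> sdeg m (\<lambda>i. \<alpha> i - \<beta> i) (S - T) \<le> sdeg m \<alpha> S"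
  using sdeg_split by fastforce

lemma swap4: "(\<Sum>\<beta>\<in>B. \<Sum>T\<in>P. \<Sum>i\<in>I. \<Sum>j\<in>J. f \<beta> T i j) = (\<Sum>i\<in>I. \<Sum>j\<in>J. \<Sum>\<beta>\<in>B. \<Sum>T\<in>P. f \<beta> T i j)"
proof -
  have 1: "(\<Sum>T\<in>P. \<Sum>i\<in>I. \<Sum>j\<in>J. f \<beta> T i j) = (\<Sum>i\<in>I. \<Sum>j\<in>J. \<Sum>T\<in>P. f \<beta> T i j)" for \<beta>
  proof -
    have "(\<Sum>T\<in>P. \<Sum>i\<in>I. \<Sum>j\<in>J. f \<beta> T i j) = (\<Sum>i\<in>I. \<Sum>T\<in>P. \<Sum>j\<in>J. f \<beta> T i j)" by (rule sum.swap)
    also have "\<dots> = (\<Sum>i\<in>I. \<Sum>j\<in>J. \<Sum>T\<in>P. f \<beta> T i j)" by (rule sum.cong[OF refl], rule sum.swap)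
    finally show ?thesis .
  qed
  have "(\<Sum>\<beta>\<in>B. \<Sum>T\<in>P. \<Sum>i\<in>I. \<Sum>j\<in>J. f \<beta> T i j) = (\<Sum>\<beta>\<in>B. \<Sum>i\<in>I. \<Sum>j\<in>J. \<Sum>T\<in>P. f \<beta> T i j)"
    by (rule sum.cong[OF refl], rule 1)
  also have "\<dots> = (\<Sum>i\<in>I. \<Sum>\<beta>\<in>B. \<Sum>j\<in>J. \<Sum>T\<in>P. f \<beta> T i j)" by (rule sum.swap)
  also have "\<dots> = (\<Sum>i\<in>I. \<Sum>j\<in>J. \<Sum>\<beta>\<in>B. \<Sum>T\<in>P. f \<beta> T i j)" by (rule sum.cong[OF refl], rule sum.swap)
  finally show ?thesis .
qed

lemma sev_mult:
  assumes s: "s \<in> mhat m n 1"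
  shows "sev m (F * G) s = smult (sev m F s) (sev m G s)"
proof (rule Ahat_eqI[of _ m n])
  have sA: "s \<in> Ahat m n" using s by (rule mhat_A)
  show "sev m (F * G) s \<in> Ahat m n" "smult (sev m F s) (sev m G s) \<in> Ahat m n"
    using s by (auto intro!: sev_A smult_Ahat)
  fix \<alpha> S assume v: "valid_idx m n \<alpha> S"
  have fS: "finite S" using v by (rule valid_finiteS)
  define D where "D = sdeg m \<alpha> S"
  define X where "X = (\<lambda>i j. fps_nth F i * fps_nth G j * spow s (i + j) \<alpha> S)"
  have "smult (sev m F s) (sev m G s) \<alpha> S = (\<Sum>\<beta>\<in>Le \<alpha>. \<Sum>T\<in>Pow S. shuffle_sign T (S - T) *
      (\<Sum>i\<le>D. fps_nth F i * spow s i \<beta> T) * (\<Sum>j\<le>D. fps_nth G j * spow s j (\<lambda>i. \<alpha> i - \<beta> i) (S - T)))"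
    unfolding smult_Le D_def using fS
    by (intro sum.cong refl) (simp add: sev_alt[OF s sdeg_le] sev_alt[OF s sdeg_le2])
  also have "\<dots> = (\<Sum>\<beta>\<in>Le \<alpha>. \<Sum>T\<in>Pow S. \<Sum>i\<le>D. \<Sum>j\<le>D. fps_nth F i * fps_nth G j *
      (shuffle_sign T (S - T) * spow s i \<beta> T * spow s j (\<lambda>i. \<alpha> i - \<beta> i) (S - T)))"
    by (intro sum.cong refl) (simp add: sum_distrib_left sum_distrib_right mult_ac, rule sum.swap)
  also have "\<dots> = (\<Sum>i\<le>D. \<Sum>j\<le>D. \<Sum>\<beta>\<in>Le \<alpha>. \<Sum>T\<in>Pow S. fps_nth F i * fps_nth G j *
      (shuffle_sign T (S - T) * spow s i \<beta> T * spow s j (\<lambda>i. \<alpha> i - \<beta> i) (S - T)))"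
    by (rule swap4)
  also have "\<dots> = (\<Sum>i\<le>D. \<Sum>j\<le>D. fps_nth F i * fps_nth G j * smult (spow s i) (spow s j) \<alpha> S)"
    unfolding smult_Le by (simp only: sum_distrib_left)
  also have "\<dots> = (\<Sum>i\<le>D. \<Sum>j\<le>D. X i j)"
    unfolding X_def by (simp add: spow_add[OF sA])
  also have "\<dots> = (\<Sum>(i,j)\<in>{..D} \<times> {..D}. X i j)" by (rule sum.cartesian_product)
  also have "\<dots> = (\<Sum>(i,j)\<in>{(i,j). i + j \<le> D}. X i j)"
  proof (rule sum.mono_neutral_right)
    show "{(i, j). i + j \<le> D} \<subseteq> {..D} \<times> {..D}" by auto
    show "\<forall>x\<in>{..D} \<times> {..D} - {(i, j). i + j \<le> D}. (case x of (i, j) \<Rightarrow> X i j) = 0"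
      using mhatD[OF spow_mhat[OF s]] unfolding X_def D_def by (auto, metis not_le)
  qed auto
  also have "\<dots> = (\<Sum>k\<le>D. \<Sum>i\<le>k. X i (k - i))" by (rule sum.triangle_reindex_eq)
  also have "\<dots> = sev m (F * G) s \<alpha> S"
    unfolding sev_def D_def[symmetric] X_def fps_mult_nth
    by (intro sum.cong refl) (auto simp: sum_distrib_right atLeast0AtMost intro!: sum.cong)
  finally show "sev m (F * G) s \<alpha> S = smult (sev m F s) (sev m G s) \<alpha> S" by simp
qed

lemma sev_one: "sev m 1 s = sone"
proof (intro ext)
  fix \<alpha> S
  have "sev m 1 s \<alpha> S = (\<Sum>k\<le>sdeg m \<alpha> S. if k = 0 then spow s k \<alpha> S else 0)"
    unfolding sev_def by (rule sum.cong) (auto simp: fps_one_nth)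
  also have "\<dots> = sone \<alpha> S" by simp
  finally show "sev m 1 s \<alpha> S = sone \<alpha> S" .
qed

lemma sev_1X:
  assumes s: "s \<in> mhat m n 1"
  shows "sev m (1 + fps_X) s = sadd sone s"
proof (intro ext)
  fix \<alpha> S
  have sA: "s \<in> Ahat m n" using s by (rule mhat_A)
  have "sev m (1 + fps_X) s \<alpha> S = (\<Sum>k\<le>Suc (sdeg m \<alpha> S). fps_nth (1 + fps_X) k * spow s k \<alpha> S)"
    by (rule sev_alt[OF s]) simp
  also have "\<dots> = (\<Sum>k\<in>{0,1}. fps_nth (1 + fps_X) k * spow s k \<alpha> S)"
    by (rule sum.mono_neutral_right) (auto simp: fps_X_nth)
  also have "\<dots> = spow s 0 \<alpha> S + spow s 1 \<alpha> S" by (simp add: fps_X_nth)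
  also have "\<dots> = sadd sone s \<alpha> S"
    by (simp add: spow_Suc sadd_def smult_sone_right[OF sA])
  finally show "sev m (1 + fps_X) s \<alpha> S = sadd sone s \<alpha> S" .
qed

lemma sqrt_inv_exists:
  assumes s: "s \<in> mhat m n 1" and se: "homog m n False s"
  shows "\<exists>v. homog m n False v \<and> smult (smult v v) (sadd sone s) = sone"
proof -
  define V :: "complex fps" where "V = fps_binomial (-1/2)"
  have "V * V * (1 + fps_X) = 1"
    unfolding V_def fps_binomial_1[symmetric] fps_binomial_add_mult[symmetric] by simp
  hence "sev m (V * V * (1 + fps_X)) s = sone" using sev_one by simp
  hence "smult (smult (sev m V s) (sev m V s)) (sadd sone s) = sone"
    by (simp only: sev_mult[OF s] sev_1X[OF s])
  thus ?thesis using sev_homog[OF s se] by blast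
qed

lemma quad_solve: "\<exists>l u::complex. l * l * c + 2 * l * u + u * u * d = 1"
proof (cases "c = 0")
  case False
  have "(1 / csqrt c) * (1 / csqrt c) * c + 2 * (1 / csqrt c) * 0 + 0 * 0 * d = 1"
    using False by (simp add: power2_eq_square[symmetric] power_divide)
  thus ?thesis by blast
next
  case c: True
  show ?thesis
  proof (cases "d = 0")
    case False
    have "0 * 0 * c + 2 * 0 * (1 / csqrt d) + (1 / csqrt d) * (1 / csqrt d) * d = 1"
      using False by (simp add: power2_eq_square[symmetric] power_divide)
    thus ?thesis by blast
  next
    case True
    have "csqrt 2 * csqrt 2 = 2" by (metis power2_csqrt power2_eq_square)
    hence "(1 / csqrt 2) * (1 / csqrt 2) * c + 2 * (1 / csqrt 2) * (1 / csqrt 2) + (1 / csqrt 2) * (1 / csqrt 2) * d = 1"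
      using c True by (simp add: field_simps)
    thus ?thesis by blast
  qed
qed

lemma x_eq_m2x: assumes "x = sadd (sneg x) (sscal (-1) x)" shows "x = szero"
proof (rule ext)+
  fix \<alpha> S have "x \<alpha> S = - x \<alpha> S - x \<alpha> S" using fun_cong[OF fun_cong[OF assms, of \<alpha>], of S] by (simp add: pw)
  thus "x \<alpha> S = szero \<alpha> S" by (simp add: szero_def)
qed

lemma xx_zero: assumes "szero = sadd x x" shows "x = szero"
proof (rule ext)+
  fix \<alpha> S have "0 = x \<alpha> S + x \<alpha> S" using fun_cong[OF fun_cong[OF assms, of \<alpha>], of S] by (simp add: pw)
  thus "x \<alpha> S = szero \<alpha> S" by (simp add: szero_def)
qed

context pb
begin

lemma h_from_h0:
  assumes h0: "homog m n True h0" and v: "homog m n False v"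
    and vw: "smult (smult v v) (br h0 h0) = sone"
  shows "\<exists>h. homog m n True h \<and> br h h = sone"
proof -
  define w where "w = br h0 h0"
  have h0A: "h0 \<in> A" using h0 by (rule homogD)
  have vA: "v \<in> A" using v by (rule homogD)
  have wh: "homog m n False w" unfolding w_def using br_homog[OF h0 h0] by simp
  have wA: "w \<in> A" using wh by (rule homogD)
  have vvh: "homog m n False (smult v v)" using homog_smult[OF v v] by simp
  have vvA: "smult v v \<in> A" using vvh by (rule homogD)
  have vw': "smult (smult v v) w = sone" using vw unfolding w_def .
  have Dw: "br h0 w = szero"
  proof -
    have "br h0 w = sadd (br w h0) (sscal (ssign True True) (br h0 w))"
      unfolding w_def by (rule br_jac[OF h0 h0 h0A])
    also have "br w h0 = sneg (sscal (ssign False True) (br h0 w))" by (rule br_anti[OF wh h0])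
    finally have "br h0 w = sadd (sneg (br h0 w)) (sscal (-1) (br h0 w))" by (simp add: ssign_def)
    thus ?thesis by (rule x_eq_m2x)
  qed
  define u where "u = br h0 v"
  have uh: "homog m n True u" unfolding u_def using br_homog[OF h0 v] by simp
  have uA: "u \<in> A" using uh by (rule homogD)
  have Du: "u = szero"
  proof -
    have "szero = br h0 sone" by (rule br_sone_right_h[OF h0, symmetric])
    also have "\<dots> = br h0 (smult (smult v v) w)" by (simp only: vw')
    also have "\<dots> = sadd (smult (br h0 (smult v v)) w) (sscal (ssign True False) (smult (smult v v) (br h0 w)))"
      by (rule br_leib[OF h0 vvh wA])
    also have "\<dots> = smult (br h0 (smult v v)) w"
      by (simp only: Dw smult_szero_right sscal_szero sadd_szero)
    also have "br h0 (smult v v) = sadd (smult u v) (sscal (ssign True False) (smult v u))"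
      unfolding u_def by (rule br_leib[OF h0 v vA])
    also have "smult v u = smult u v" by (rule comm_even[OF v uh, symmetric])
    finally have e: "szero = smult (sadd (smult u v) (sscal (ssign True False) (smult u v))) w" .
    have Y: "smult (smult (smult u v) w) v = u"
    proof -
      have "smult (smult (smult u v) w) v = smult u (smult v (smult w v))"
        by (simp only: smult_assoc[OF smult_Ahat[OF uA vA] wA vA] smult_assoc[OF uA vA smult_Ahat[OF wA vA]])
      also have "smult w v = smult v w" by (rule comm_even[OF v wh])
      also have "smult v (smult v w) = sone" by (simp only: smult_assoc[OF vA vA wA, symmetric] vw')
      finally show ?thesis by (simp only: smult_sone_right[OF uA])
    qed
    have "szero = smult szero v" by simp
    also have "\<dots> = sadd (smult (smult (smult u v) w) v) (smult (smult (smult u v) w) v)"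
      by (subst e) (simp add: ssign_def smult_sadd_left)
    also have "\<dots> = sadd u u" by (simp only: Y)
    finally show ?thesis by (rule xx_zero)
  qed
  define h where "h = smult h0 v"
  have hh: "homog m n True h" unfolding h_def using homog_smult[OF h0 v] by simp
  have hA: "h \<in> A" using hh by (rule homogD)
  have Dv: "br h0 v = szero" using Du unfolding u_def .
  have vv0: "br v v = szero"
  proof -
    have "br v v = sneg (sscal (ssign False False) (br v v))" by (rule br_anti[OF v v])
    hence "br v v = sneg (br v v)" by (simp add: ssign_def)
    thus ?thesis by (rule x_eq_negx)
  qed
  have vh0: "br v h0 = szero"
  proof -
    have "br v h0 = sneg (sscal (ssign False True) (br h0 v))" by (rule br_anti[OF v h0])
    thus ?thesis by (simp only: Dv sscal_szero sneg_szero)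
  qed
  have vh: "br v h = szero"
  proof -
    have "br v h = sadd (smult (br v h0) v) (sscal (ssign False True) (smult h0 (br v v)))"
      unfolding h_def by (rule br_leib[OF v h0 vA])
    thus ?thesis by (simp only: vh0 vv0 smult_szero_left smult_szero_right sscal_szero sadd_szero)
  qed
  have hv: "br h v = szero"
  proof -
    have "br h v = sneg (sscal (ssign True False) (br v h))" by (rule br_anti[OF hh v])
    thus ?thesis by (simp only: vh sscal_szero sneg_szero)
  qed
  have h0h: "br h0 h = smult w v"
  proof -
    have "br h0 h = sadd (smult (br h0 h0) v) (sscal (ssign True True) (smult h0 (br h0 v)))"
      unfolding h_def by (rule br_leib[OF h0 h0 vA])
    thus ?thesis by (simp only: Dv smult_szero_right sscal_szero sadd_szero w_def)
  qed
  have hh0: "br h h0 = smult w v"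
  proof -
    have "br h h0 = sneg (sscal (ssign True True) (br h0 h))" by (rule br_anti[OF hh h0])
    thus ?thesis by (simp add: h0h ssign_def pw)
  qed
  have "br h (smult h0 v) = sadd (smult (br h h0) v) (sscal (ssign True True) (smult h0 (br h v)))"
    by (rule br_leib[OF hh h0 vA])
  hence "br h h = sadd (smult (br h h0) v) (sscal (ssign True True) (smult h0 (br h v)))"
    by (simp only: h_def[symmetric])
  also have "\<dots> = smult (smult w v) v" by (simp only: hv hh0 smult_szero_right sscal_szero sadd_szero)
  also have "\<dots> = smult w (smult v v)" by (rule smult_assoc[OF wA vA vA])
  also have "\<dots> = smult (smult v v) w" by (rule comm_even[OF vvh wh])
  also have "\<dots> = sone" by (rule vw')
  finally show ?thesis using hh by blast
qed

end

context pb
begin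

lemma part1:
  "\<forall>f g t. homog m n True f \<and> f \<in> mhat m n 1 \<and> homog m n True g \<and> g \<in> mhat m n 1 \<and>
            t \<in> mhat m n 1 \<and> br f g = sadd sone t
            \<longrightarrow> (\<exists>h. homog m n True h \<and> br h h = sone)"
proof (intro allI impI)
  fix f g t
  assume H: "homog m n True f \<and> f \<in> mhat m n 1 \<and> homog m n True g \<and> g \<in> mhat m n 1 \<and>
            t \<in> mhat m n 1 \<and> br f g = sadd sone t"
  have f: "homog m n True f" and g: "homog m n True g" and t: "t \<in> mhat m n 1"
    and fg: "br f g = sadd sone t" using H by auto
  have fA: "f \<in> A" using f by (rule homogD)
  have gA: "g \<in> A" using g by (rule homogD)
  define z0 :: "nat \<Rightarrow> nat" where "z0 = (\<lambda>_. 0)"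
  have sd0: "sdeg m z0 {} = 0" unfolding sdeg_def z0_def by simp
  have t0: "t z0 {} = 0" using mhatD[OF t, of z0 "{}"] sd0 by simp
  have fg0: "br f g z0 {} = 1" using t0 by (simp add: fg sadd_def sone_def z0_def)
  have gf: "br g f = br f g"
  proof -
    have "br g f = sneg (sscal (ssign True True) (br f g))" by (rule br_anti[OF g f])
    thus ?thesis by (simp add: ssign_def pw)
  qed
  obtain l u :: complex where quad: "l * l * br f f z0 {} + 2 * l * u + u * u * br g g z0 {} = 1"
    using quad_solve by blast
  define h0 where "h0 = sadd (sscal l f) (sscal u g)"
  have h0h: "homog m n True h0" unfolding h0_def by (intro homog_sadd homog_sscal f g)
  have h0A: "h0 \<in> A" using h0h by (rule homogD)
  define w where "w = br h0 h0"
  have we: "w = sadd (sadd (sscal (l*l) (br f f)) (sscal (l*u) (br f g))) (sadd (sscal (u*l) (br g f)) (sscal (u*u) (br g g)))"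
    unfolding w_def h0_def using fA gA
    by (simp add: br_add_left br_add_right br_scal_left br_scal_right sscal_Ahat sadd_Ahat) (simp add: pw algebra_simps)
  have w0: "w z0 {} = 1" unfolding we gf using quad fg0 by (simp add: pw algebra_simps)
  have wh: "homog m n False w" unfolding w_def using br_homog[OF h0h h0h] by simp
  have wA: "w \<in> A" using wh by (rule homogD)
  define s where "s = sadd w (sneg sone)"
  have sh: "homog m n False s" unfolding s_def by (intro homog_sadd homog_sneg wh homog_sone)
  have sA: "s \<in> A" using sh by (rule homogD)
  have s1: "s \<in> mhat m n 1"
    unfolding mhat_iff
  proof (intro conjI allI impI sA)
    fix \<alpha> S assume d: "sdeg m \<alpha> S < 1"
    show "s \<alpha> S = 0"
    proof (cases "valid_idx m n \<alpha> S")
      case False thus ?thesis using sA AhatD by blast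
    next
      case True
      have fS: "finite S" using True by (rule valid_finiteS)
      have "card S = 0" "(\<Sum>i<m. \<alpha> i) = 0" using d unfolding sdeg_def by auto
      hence S: "S = {}" and lo: "\<forall>i<m. \<alpha> i = 0" using fS by auto
      have "\<alpha> = z0" using lo True unfolding valid_idx_def z0_def by (auto simp: fun_eq_iff) (metis not_le)
      moreover have "s z0 {} = 0" using w0 unfolding s_def by (simp add: pw sone_def z0_def)
      ultimately show ?thesis using S by simp
    qed
  qed
  have ws: "sadd sone s = w" unfolding s_def by (simp add: pw)
  obtain v where v: "homog m n False v" and vv: "smult (smult v v) (sadd sone s) = sone"
    using sqrt_inv_exists[OF s1 sh] by blast
  have "smult (smult v v) (br h0 h0) = sone" using vv unfolding ws w_def .
  thus "\<exists>h. homog m n True h \<and> br h h = sone" by (rule h_from_h0[OF h0h v])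
qed

end

theorem lemma2p2:
  fixes m n :: nat and br :: "ser \<Rightarrow> ser \<Rightarrow> ser"
  assumes "poisson_bracket m n br"
  shows "(\<forall>f g t. homog m n True f \<and> f \<in> mhat m n 1 \<and> homog m n True g \<and> g \<in> mhat m n 1 \<and>
            t \<in> mhat m n 1 \<and> br f g = sadd sone t
            \<longrightarrow> (\<exists>h. homog m n True h \<and> br h h = sone))
       \<and> (\<forall>h. homog m n True h \<and> br h h = sone \<longrightarrow>
            (let B1 = {b \<in> Ahat m n. br h b = szero};
                 \<phi> = (\<lambda>x. sadd (fst x) (smult h (snd x)))
             in bij_betw \<phi> (B1 \<times> B1) (Ahat m n) \<and>
                \<phi> tone = sone \<and>
                (\<forall>x\<in>B1 \<times> B1. \<forall>y\<in>B1 \<times> B1.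
                   \<phi> (tadd x y) = sadd (\<phi> x) (\<phi> y) \<and>
                   \<phi> (tmult x y) = smult (\<phi> x) (\<phi> y) \<and>
                   \<phi> (tbr br x y) = br (\<phi> x) (\<phi> y)) \<and>
                (\<forall>c. \<forall>x\<in>B1 \<times> B1. \<phi> (tscal c x) = sscal c (\<phi> x)) \<and>
                (\<forall>x\<in>B1 \<times> B1. \<phi> (tpar x) = spar (\<phi> x))))"
proof -
  interpret pb m n br by unfold_locales (rule assms)
  show ?thesis
  proof (rule conjI)
    show "\<forall>f g t. homog m n True f \<and> f \<in> mhat m n 1 \<and> homog m n True g \<and> g \<in> mhat m n 1 \<and>
            t \<in> mhat m n 1 \<and> br f g = sadd sone t
            \<longrightarrow> (\<exists>h. homog m n True h \<and> br h h = sone)" by (rule part1)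
  next
    show "\<forall>h. homog m n True h \<and> br h h = sone \<longrightarrow>
            (let B1 = {b \<in> Ahat m n. br h b = szero};
                 \<phi> = (\<lambda>x. sadd (fst x) (smult h (snd x)))
             in bij_betw \<phi> (B1 \<times> B1) (Ahat m n) \<and>
                \<phi> tone = sone \<and>
                (\<forall>x\<in>B1 \<times> B1. \<forall>y\<in>B1 \<times> B1.
                   \<phi> (tadd x y) = sadd (\<phi> x) (\<phi> y) \<and>
                   \<phi> (tmult x y) = smult (\<phi> x) (\<phi> y) \<and>
                   \<phi> (tbr br x y) = br (\<phi> x) (\<phi> y)) \<and>
                (\<forall>c. \<forall>x\<in>B1 \<times> B1. \<phi> (tscal c x) = sscal c (\<phi> x)) \<and>
                (\<forall>x\<in>B1 \<times> B1. \<phi> (tpar x) = spar (\<phi> x)))"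
    proof (intro allI impI)
      fix h assume H: "homog m n True h \<and> br h h = sone"
      interpret pbh m n br h using H by unfold_locales auto
      show "let B1 = {b \<in> Ahat m n. br h b = szero};
                 \<phi> = (\<lambda>x. sadd (fst x) (smult h (snd x)))
             in bij_betw \<phi> (B1 \<times> B1) (Ahat m n) \<and>
                \<phi> tone = sone \<and>
                (\<forall>x\<in>B1 \<times> B1. \<forall>y\<in>B1 \<times> B1.
                   \<phi> (tadd x y) = sadd (\<phi> x) (\<phi> y) \<and>
                   \<phi> (tmult x y) = smult (\<phi> x) (\<phi> y) \<and>
                   \<phi> (tbr br x y) = br (\<phi> x) (\<phi> y)) \<and>
                (\<forall>c. \<forall>x\<in>B1 \<times> B1. \<phi> (tscal c x) = sscal c (\<phi> x)) \<and>
                (\<forall>x\<in>B1 \<times> B1. \<phi> (tpar x) = spar (\<phi> x))" by (rule part2)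
    qed
  qed
qed

end
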